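(* For $N\ge1$, \[Z_N(\{u\}_N|\{w\}_N)=\frac{\prod_{j=1}^N(1-t)cu_j\prod_{j,k=1}^N(au_j+bw_k)(eu_j+fw_k)}{(cd)^{N(N-1)/2}\prod_{1\le j<k\le N}(u_j-u_k)(w_k-w_j)}\det_{1\le j,k\le N}\Big(\frac{1}{(au_j+bw_k)(eu_j+fw_k)}\Big)\] as rational functions of $u_1,\dots,u_N,w_1,\dots,w_N$.
   Context: Fix complex parameters $t,a,b,c,d,e,f$, all nonzero, with $t\neq1$, satisfying $cd+af=0$ and $tcd+be=0$. The inhomogeneous $L$-operator $L_{aj}(u,w)$ on $W_a\otimes V_j$ ($\cong\mathbb{C}^2\otimes\mathbb{C}^2$, basis $|0\rangle,|1\rangle$) has matrix elements ${}_a\langle\gamma|{}_j\langle\delta|L_{aj}(u,w)|\alpha\rangle_a|\beta\rangle_j=[L(u,w)]^{\gamma\delta}_{\alpha\beta}$: $[L]^{00}_{00}=au+bw$, $[L]^{01}_{01}=atu+bw$, $[L]^{01}_{10}=(1-t)cu$, $[L]^{10}_{01}=(1-t)dw$, $[L]^{10}_{10}=eu+fw$, $[L]^{11}_{11}=eu+tfw$, all others $0$. Define $B_N(u|\{w\}_N)={}_a\langle0|L_{aN}(u,w_N)\cdots L_{a1}(u,w_1)|1\rangle_a$ on $V_1\otimes\cdots\otimes V_N$ and $Z_N(\{u\}_N|\{w\}_N)=\langle1\cdots N|B_N(u_1|\{w\}_N)\cdots B_N(u_N|\{w\}_N)|\Omega\rangle$ with $|\Omega\rangle=|0\rangle^{\otimes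 N}$, $\langle1\cdots N|=\langle1|^{\otimes N}$. *)

theory Defs
  imports "Jordan_Normal_Form.Determinant" "HOL-Library.FuncSet" Complex_Main
begin

text \<open>Matrix elements [L(u,w)]^{gamma delta}_{alpha beta} of the inhomogeneous L-operator.
  gamma: outgoing auxiliary state, delta: outgoing quantum state,
  alpha: incoming auxiliary state, beta: incoming quantum state.\<close>
definition Lel :: "complex \<Rightarrow> complex \<Rightarrow> complex \<Rightarrow> complex \<Rightarrow> complex \<Rightarrow> complex \<Rightarrow> complex
    \<Rightarrow> complex \<Rightarrow> complex \<Rightarrow> nat \<Rightarrow> nat \<Rightarrow> nat \<Rightarrow> nat \<Rightarrow> complex" where
  "Lel t a b c d e f u w \<gamma> \<delta> \<alpha> \<beta> =
    (if (\<gamma>,\<delta>,\<alpha>,\<beta>) = (0,0,0,0) then a*u + b*w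
     else if (\<gamma>,\<delta>,\<alpha>,\<beta>) = (0,1,0,1) then a*t*u + b*w
     else if (\<gamma>,\<delta>,\<alpha>,\<beta>) = (0,1,1,0) then (1-t)*c*u
     else if (\<gamma>,\<delta>,\<alpha>,\<beta>) = (1,0,0,1) then (1-t)*d*w
     else if (\<gamma>,\<delta>,\<alpha>,\<beta>) = (1,0,1,0) then e*u + f*w
     else if (\<gamma>,\<delta>,\<alpha>,\<beta>) = (1,1,1,1) then e*u + t*f*w
     else 0)"

text \<open>Bpart ... u w k alpha delta beta: matrix element
  <alpha|_a <delta_k..delta_1| L_{ak}(u,w_k) ... L_{a1}(u,w_1) |1>_a |beta_k..beta_1>
  (configurations are functions on sites 1..k with values in {0,1}).\<close>
fun Bpart :: "complex \<Rightarrow> complex \<Rightarrow> complex \<Rightarrow> complex \<Rightarrow> complex \<Rightarrow> complex \<Rightarrow> complex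
    \<Rightarrow> complex \<Rightarrow> (nat \<Rightarrow> complex) \<Rightarrow> nat \<Rightarrow> nat \<Rightarrow> (nat \<Rightarrow> nat) \<Rightarrow> (nat \<Rightarrow> nat) \<Rightarrow> complex" where
  "Bpart t a b c d e f u w 0 \<alpha> \<delta> \<beta> = (if \<alpha> = 1 then 1 else 0)"
| "Bpart t a b c d e f u w (Suc k) \<alpha>' \<delta> \<beta> =
     (\<Sum>\<alpha>\<in>{0,1}. Lel t a b c d e f u (w (Suc k)) \<alpha>' (\<delta> (Suc k)) \<alpha> (\<beta> (Suc k))
                  * Bpart t a b c d e f u w k \<alpha> \<delta> \<beta>)"

text \<open>Basis configurations of V_1 \<otimes> ... \<otimes> V_N.\<close>
definition configs :: "nat \<Rightarrow> (nat \<Rightarrow> nat) set" where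
  "configs N = {1..N} \<rightarrow>\<^sub>E {0,1}"

text \<open>Matrix element <delta| B_N(u|{w}_N) |beta>.\<close>
definition Bel :: "complex \<Rightarrow> complex \<Rightarrow> complex \<Rightarrow> complex \<Rightarrow> complex \<Rightarrow> complex \<Rightarrow> complex
    \<Rightarrow> nat \<Rightarrow> complex \<Rightarrow> (nat \<Rightarrow> complex) \<Rightarrow> (nat \<Rightarrow> nat) \<Rightarrow> (nat \<Rightarrow> nat) \<Rightarrow> complex" where
  "Bel t a b c d e f N u w \<delta> \<beta> = Bpart t a b c d e f u w N 0 \<delta> \<beta>"

definition Bop :: "complex \<Rightarrow> complex \<Rightarrow> complex \<Rightarrow> complex \<Rightarrow> complex \<Rightarrow> complex \<Rightarrow> complex
    \<Rightarrow> nat \<Rightarrow> complex \<Rightarrow> (nat \<Rightarrow> complex) \<Rightarrow> ((nat \<Rightarrow> nat) \<Rightarrow> complex) \<Rightarrow> ((nat \<Rightarrow> nat) \<Rightarrow> complex)" where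
  "Bop t a b c d e f N u w \<psi> = (\<lambda>\<delta>. \<Sum>\<beta>\<in>configs N. Bel t a b c d e f N u w \<delta> \<beta> * \<psi> \<beta>)"

definition Omega :: "nat \<Rightarrow> (nat \<Rightarrow> nat) \<Rightarrow> complex" where
  "Omega N = (\<lambda>\<beta>. if \<forall>i\<in>{1..N}. \<beta> i = 0 then 1 else 0)"

text \<open>Z_N = <1...N| B_N(u_1) ... B_N(u_N) |Omega>.\<close>
definition Zpf :: "complex \<Rightarrow> complex \<Rightarrow> complex \<Rightarrow> complex \<Rightarrow> complex \<Rightarrow> complex \<Rightarrow> complex
    \<Rightarrow> nat \<Rightarrow> (nat \<Rightarrow> complex) \<Rightarrow> (nat \<Rightarrow> complex) \<Rightarrow> complex" where
  "Zpf t a b c d e f N u w =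
     foldr (\<lambda>j \<psi>. Bop t a b c d e f N (u j) w \<psi>) [1..<Suc N] (Omega N) (\<lambda>i\<in>{1..N}. 1)"

end

theory Submission
  imports Defs
begin


definition pf :: "nat \<Rightarrow> (complex \<Rightarrow> complex) \<Rightarrow> bool" where
  "pf n F \<longleftrightarrow> (\<exists>p. degree p \<le> n \<and> (\<forall>x. F x = poly p x))"

lemma pf_const[simp, intro]: "pf n (\<lambda>x. c)"
  unfolding pf_def by (rule exI[of _ "[:c:]"]) auto

lemma pf_id[intro]: "pf 1 (\<lambda>x. x)"
  unfolding pf_def by (rule exI[of _ "[:0,1:]"]) auto

lemma pf_mono: "pf n F \<Longrightarrow> n \<le> m \<Longrightarrow> pf m F"
  unfolding pf_def by (elim exE conjE, intro exI conjI) (erule le_trans, assumption, assumption)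

lemma pf_add: "pf n F \<Longrightarrow> pf n G \<Longrightarrow> pf n (\<lambda>x. F x + G x)"
  unfolding pf_def
proof (elim exE conjE)
  fix p q assume "degree p \<le> n" "\<forall>x. F x = poly p x" "degree q \<le> n" "\<forall>x. G x = poly q x"
  then show "\<exists>r. degree r \<le> n \<and> (\<forall>x. F x + G x = poly r x)"
    by (intro exI[of _ "p + q"]) (simp add: degree_add_le)
qed

lemma pf_mult: "pf n F \<Longrightarrow> pf m G \<Longrightarrow> pf (n+m) (\<lambda>x. F x * G x)"
  unfolding pf_def
proof (elim exE conjE)
  fix p q assume "degree p \<le> n" "\<forall>x. F x = poly p x" "degree q \<le> m" "\<forall>x. G x = poly q x"
  then show "\<exists>r. degree r \<le> n + m \<and> (\<forall>x. F x * G x = poly r x)"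
    by (intro exI[of _ "p * q"]) (simp add: order_trans[OF degree_mult_le])
qed

lemma pf_uminus: "pf n F \<Longrightarrow> pf n (\<lambda>x. - F x)"
  unfolding pf_def
proof (elim exE conjE)
  fix p assume "degree p \<le> n" "\<forall>x. F x = poly p x"
  then show "\<exists>r. degree r \<le> n \<and> (\<forall>x. - F x = poly r x)"
    by (intro exI[of _ "- p"]) simp
qed

lemma pf_diff: assumes "pf n F" "pf n G" shows "pf n (\<lambda>x. F x - G x)"
proof -
  have "pf n (\<lambda>x. F x + - G x)" by (rule pf_add[OF assms(1) pf_uminus[OF assms(2)]])
  then show ?thesis by simp
qed

lemma pf_affine: "pf 1 (\<lambda>x. p + q * x)"
  unfolding pf_def by (rule exI[of _ "[:p, q:]"]) simp

lemma pf_sum: "finite A \<Longrightarrow> (\<And>a. a \<in> A \<Longrightarrow> pf n (F a)) \<Longrightarrow> pf n (\<lambda>x. \<Sum>a\<in>A. F a x)"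
proof (induction A rule: finite_induct)
  case empty then show ?case by simp
next
  case (insert a A)
  then have "pf n (\<lambda>x. F a x + (\<Sum>a\<in>A. F a x))" by (intro pf_add) auto
  then show ?case using insert by simp
qed

lemma pf_prod: "finite A \<Longrightarrow> (\<And>a. a \<in> A \<Longrightarrow> pf (n a) (F a)) \<Longrightarrow> pf (\<Sum>a\<in>A. n a) (\<lambda>x. \<Prod>a\<in>A. F a x)"
proof (induction A rule: finite_induct)
  case empty then show ?case by simp
next
  case (insert a A)
  then have "pf (n a + sum n A) (\<lambda>x. F a x * (\<Prod>a\<in>A. F a x))" by (intro pf_mult) auto
  then show ?case using insert by simp
qed

lemma pf_zero:
  assumes "pf n F" "finite S" "n < card S" "\<And>x. x \<in> S \<Longrightarrow> F x = 0"
  shows "F y = 0"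
proof -
  obtain p where p: "degree p \<le> n" "\<And>x. F x = poly p x" using assms(1) unfolding pf_def by auto
  have "p = 0"
    by (rule poly_eqI_degree[of S]) (use assms p in auto)
  then show ?thesis using p by simp
qed

definition ispoly :: "(complex \<Rightarrow> complex) \<Rightarrow> bool" where
  "ispoly F \<longleftrightarrow> (\<exists>n. pf n F)"

lemma ispoly_zero:
  assumes "ispoly F" "infinite {x. F x = 0}"
  shows "F y = 0"
proof -
  obtain n p where p: "degree p \<le> n" "\<And>x. F x = poly p x" using assms(1) unfolding pf_def ispoly_def by auto
  have "p = 0" using poly_roots_finite[of p] assms(2) p(2) by auto
  then show ?thesis using p by simp
qed

lemma ispoly_const[simp,intro]: "ispoly (\<lambda>x. c)" unfolding ispoly_def by auto
lemma ispoly_affine[intro]: "ispoly (\<lambda>x. p + q * x)" unfolding ispoly_def using pf_affine by blast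
lemma ispoly_add: "ispoly F \<Longrightarrow> ispoly G \<Longrightarrow> ispoly (\<lambda>x. F x + G x)"
  unfolding ispoly_def
proof (elim exE)
  fix n m assume "pf n F" "pf m G"
  then have "pf (max n m) F" "pf (max n m) G" by (auto elim: pf_mono)
  then show "\<exists>k. pf k (\<lambda>x. F x + G x)" by (blast intro: pf_add)
qed
lemma ispoly_mult: "ispoly F \<Longrightarrow> ispoly G \<Longrightarrow> ispoly (\<lambda>x. F x * G x)"
  unfolding ispoly_def by (blast intro: pf_mult)
lemma ispoly_uminus: "ispoly F \<Longrightarrow> ispoly (\<lambda>x. - F x)"
  unfolding ispoly_def by (blast intro: pf_uminus)
lemma ispoly_diff: assumes "ispoly F" "ispoly G" shows "ispoly (\<lambda>x. F x - G x)"
proof -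
  have "ispoly (\<lambda>x. F x + - G x)" by (rule ispoly_add[OF assms(1) ispoly_uminus[OF assms(2)]])
  then show ?thesis by simp
qed
lemma ispoly_sum: "finite A \<Longrightarrow> (\<And>a. a \<in> A \<Longrightarrow> ispoly (F a)) \<Longrightarrow> ispoly (\<lambda>x. \<Sum>a\<in>A. F a x)"
proof (induction A rule: finite_induct)
  case empty then show ?case by simp
next
  case (insert a A)
  then have "ispoly (\<lambda>x. F a x + (\<Sum>a\<in>A. F a x))" by (intro ispoly_add) auto
  then show ?case using insert by simp
qed
lemma ispoly_prod: "finite A \<Longrightarrow> (\<And>a. a \<in> A \<Longrightarrow> ispoly (F a)) \<Longrightarrow> ispoly (\<lambda>x. \<Prod>a\<in>A. F a x)"
proof (induction A rule: finite_induct)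
  case empty then show ?case by simp
next
  case (insert a A)
  then have "ispoly (\<lambda>x. F a x * (\<Prod>a\<in>A. F a x))" by (intro ispoly_mult) auto
  then show ?case using insert by simp
qed
lemma ispoly_power: "ispoly F \<Longrightarrow> ispoly (\<lambda>x. F x ^ m)"
proof (induction m)
  case 0 then show ?case by simp
next
  case (Suc m)
  then have "ispoly (\<lambda>x. F x * F x ^ m)" by (intro ispoly_mult) auto
  then show ?case by simp
qed



lemma configs_Suc: "configs (Suc n) = (\<lambda>(y, g). g(Suc n := y)) ` ({0,1} \<times> configs n)"
proof -
  have "{1..Suc n} = insert (Suc n) {1..n}" by auto
  then show ?thesis unfolding configs_def using PiE_insert_eq[of "Suc n" "{1..n}" "\<lambda>_. {0::nat,1}"] by simp
qed

lemma finite_configs[simp]: "finite (configs n)"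
  unfolding configs_def by (simp add: finite_PiE)

lemma configs_Suc_sum:
  "(\<Sum>\<beta>\<in>configs (Suc n). g \<beta>) = (\<Sum>\<beta>\<in>configs n. g (\<beta>(Suc n := 0)) + g (\<beta>(Suc n := 1)))"
proof -
  have inj: "inj_on (\<lambda>(y, g). g(Suc n := y)) ({0::nat,1} \<times> configs n)"
    unfolding configs_def by (rule inj_combinator) auto
  have "(\<Sum>\<beta>\<in>configs (Suc n). g \<beta>) = (\<Sum>p\<in>{0::nat,1} \<times> configs n. g ((\<lambda>(y, g). g(Suc n := y)) p))"
    unfolding configs_Suc by (subst sum.reindex[OF inj]) (simp add: o_def)
  also have "\<dots> = (\<Sum>y\<in>{0::nat,1}. \<Sum>\<beta>\<in>configs n. g (\<beta>(Suc n := y)))"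
    unfolding sum.cartesian_product by (simp add: case_prod_unfold)
  also have "\<dots> = (\<Sum>\<beta>\<in>configs n. g (\<beta>(Suc n := 0)) + g (\<beta>(Suc n := 1)))"
    by (simp add: sum.distrib)
  finally show ?thesis .
qed

lemma configs_mem: "\<beta> \<in> configs n \<Longrightarrow> i \<in> {1..n} \<Longrightarrow> \<beta> i \<in> {0,1}"
  unfolding configs_def by auto

lemma configs_out: "\<beta> \<in> configs n \<Longrightarrow> i \<notin> {1..n} \<Longrightarrow> \<beta> i = undefined"
  unfolding configs_def by auto

context fixes t a b c d e f :: complex
begin

abbreviation "LL \<equiv> Lel t a b c d e f"
abbreviation "BP \<equiv> Bpart t a b c d e f"
abbreviation "BL \<equiv> Bel t a b c d e f"
abbreviation "BO \<equiv> Bop t a b c d e f"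
abbreviation "ZZ \<equiv> Zpf t a b c d e f"

lemma Bpart_cong:
  "(\<And>i. i \<in> {1..k} \<Longrightarrow> \<delta> i = \<delta>' i \<and> \<beta> i = \<beta>' i \<and> w i = w' i) \<Longrightarrow>
   BP u w k \<alpha> \<delta> \<beta> = BP u w' k \<alpha> \<delta>' \<beta>'"
proof (induction k arbitrary: \<alpha>)
  case 0
  then show ?case by simp
next
  case (Suc k)
  have h: "\<delta> (Suc k) = \<delta>' (Suc k)" "\<beta> (Suc k) = \<beta>' (Suc k)" "w (Suc k) = w' (Suc k)"
    using Suc.prems[of "Suc k"] by auto
  have "BP u w k \<alpha>' \<delta> \<beta> = BP u w' k \<alpha>' \<delta>' \<beta>'" for \<alpha>'
    using Suc by auto
  then show ?case using h by simp
qed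

lemma Bop_cong_delta:
  "(\<And>i. i \<in> {1..n} \<Longrightarrow> \<delta> i = \<delta>' i) \<Longrightarrow> BO n u w \<psi> \<delta> = BO n u w \<psi> \<delta>'"
  unfolding Bop_def Bel_def by (intro sum.cong refl arg_cong2[where f="(*)"] Bpart_cong) auto

lemma Bop_cong_psi:
  "(\<And>\<beta>. \<beta> \<in> configs n \<Longrightarrow> \<psi> \<beta> = \<psi>' \<beta>) \<Longrightarrow> BO n u w \<psi> = BO n u w \<psi>'"
  unfolding Bop_def by (intro ext sum.cong) auto

lemma Bop_scale: "BO n u w (\<lambda>\<beta>. k * \<psi> \<beta>) \<delta> = k * BO n u w \<psi> \<delta>"
  unfolding Bop_def by (simp add: sum_distrib_left mult.left_commute)

lemma foldr_Bop_scale: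
  "foldr (\<lambda>j \<psi>. BO n (u j) w \<psi>) js (\<lambda>\<beta>. k * \<psi> \<beta>) \<delta> = k * foldr (\<lambda>j \<psi>. BO n (u j) w \<psi>) js \<psi> \<delta>"
proof (induction js arbitrary: \<delta>)
  case Nil then show ?case by simp
next
  case (Cons j js)
  have "foldr (\<lambda>j \<psi>. BO n (u j) w \<psi>) js (\<lambda>\<beta>. k * \<psi> \<beta>) = (\<lambda>\<delta>. k * foldr (\<lambda>j \<psi>. BO n (u j) w \<psi>) js \<psi> \<delta>)"
    using Cons by auto
  then show ?case by (simp add: Bop_scale)
qed

lemma foldr_Bop_zero:
  "(\<And>\<beta>. \<psi> \<beta> = 0) \<Longrightarrow> foldr (\<lambda>j \<psi>. BO n (u j) w \<psi>) js \<psi> \<delta> = 0"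
proof (induction js arbitrary: \<delta>)
  case Nil then show ?case by simp
next
  case (Cons j js)
  then show ?case by (simp add: Bop_def)
qed

lemma Bpart_u0: "BP 0 w k 0 \<delta> \<beta> = 0"
  by (induction k) (simp_all add: Lel_def)

lemma Zpf_split:
  "ZZ (Suc n) u w = foldr (\<lambda>j \<psi>. BO (Suc n) (u j) w \<psi>) [1..<Suc n] (BO (Suc n) (u (Suc n)) w (Omega (Suc n))) (\<lambda>i\<in>{1..Suc n}. 1)"
proof -
  have "[1..<Suc (Suc n)] = [1..<Suc n] @ [Suc n]" by simp
  then show ?thesis by (simp only: Zpf_def foldr_append foldr_Cons foldr_Nil o_apply id_apply)
qed

lemma Zpf_u0:
  assumes "u (Suc n) = 0"
  shows "ZZ (Suc n) u w = 0"
  unfolding Zpf_split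
  by (rule foldr_Bop_zero) (simp only: Bop_def Bel_def Bpart_u0 assms mult_zero_left sum.neutral_const)

end


lemma prod_if_all: "finite A \<Longrightarrow> (\<Prod>i\<in>A. if P i then g i else (0::complex)) = (if \<forall>i\<in>A. P i then prod g A else 0)"
  by (induction rule: finite_induct) auto

lemma zero_config: "(\<lambda>i\<in>{1..N}. 0::nat) \<in> configs N"
  unfolding configs_def by auto

lemma Omega_configs: "\<beta> \<in> configs N \<Longrightarrow> Omega N \<beta> = (if \<beta> = (\<lambda>i\<in>{1..N}. 0) then 1 else 0)"
  unfolding Omega_def configs_def by (auto simp: fun_eq_iff PiE_def extensional_def)

definition local_fn :: "nat \<Rightarrow> ((nat \<Rightarrow> nat) \<Rightarrow> complex) \<Rightarrow> bool" where
  "local_fn n \<psi> \<longleftrightarrow> (\<forall>\<beta> \<beta>'. (\<forall>i\<in>{1..n}. \<beta> i = \<beta>' i) \<longrightarrow> \<psi> \<beta> = \<psi> \<beta>')"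

lemma local_Omega: "local_fn n (Omega n)"
  unfolding local_fn_def Omega_def by auto

lemma local_scale: "local_fn n \<psi> \<Longrightarrow> local_fn n (\<lambda>\<beta>. k * \<psi> \<beta>)"
  unfolding local_fn_def by metis

context fixes t a b c d e f :: complex
begin

lemma local_Bop: "local_fn n (BO t a b c d e f n y w \<psi>)"
  unfolding local_fn_def by (auto intro: Bop_cong_delta)

lemma local_foldr: "local_fn n \<psi> \<Longrightarrow> local_fn n (foldr (\<lambda>j \<psi>. BO t a b c d e f n (u j) w \<psi>) js \<psi>)"
  by (cases js) (auto simp: local_Bop)

lemma BP_one_zero:
  "(\<And>i. i \<in> {1..k} \<Longrightarrow> \<beta> i = 0) \<Longrightarrow>
   BP t a b c d e f x w k (Suc 0) \<delta> \<beta> = (\<Prod>i=1..k. if \<delta> i = 0 then e*x + f*w i else 0)"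
proof (induction k)
  case 0 then show ?case by simp
next
  case (Suc k)
  then have IH: "BP t a b c d e f x w k (Suc 0) \<delta> \<beta> = (\<Prod>i=1..k. if \<delta> i = 0 then e*x + f*w i else 0)"
    by auto
  have b: "\<beta> (Suc k) = 0" using Suc.prems by auto
  show ?case
    by (simp add: IH b Lel_def prod.nat_ivl_Suc' mult.commute)
qed

lemma Bop_Omega:
  "BO t a b c d e f N x w (Omega N) \<delta> = BL t a b c d e f N x w \<delta> (\<lambda>i\<in>{1..N}. 0)"
proof -
  have "BO t a b c d e f N x w (Omega N) \<delta> =
        (\<Sum>\<beta>\<in>configs N. if \<beta> = (\<lambda>i\<in>{1..N}. 0) then BL t a b c d e f N x w \<delta> \<beta> else 0)"
    unfolding Bop_def by (intro sum.cong refl) (simp add: Omega_configs)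
  also have "\<dots> = BL t a b c d e f N x w \<delta> (\<lambda>i\<in>{1..N}. 0)"
    using zero_config[of N] by (simp add: sum.delta')
  finally show ?thesis .
qed

lemma freeze_base:
  assumes "a * x + b * w (Suc n) = 0"
  shows "BO t a b c d e f (Suc n) x w (Omega (Suc n)) \<delta> =
    (if \<delta> (Suc n) = 1 then ((1-t)*c*x * (\<Prod>i=1..n. e*x + f*w i)) * Omega n \<delta> else 0)"
proof -
  let ?z = "(\<lambda>i\<in>{1..Suc n}. 0::nat)"
  have z: "\<And>i. i \<in> {1..n} \<Longrightarrow> ?z i = 0" by auto
  have "BO t a b c d e f (Suc n) x w (Omega (Suc n)) \<delta> = BL t a b c d e f (Suc n) x w \<delta> ?z"
    by (rule Bop_Omega)
  also have "\<dots> = LL t a b c d e f x (w (Suc n)) 0 (\<delta> (Suc n)) 0 0 * BP t a b c d e f x w n 0 \<delta> ?z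
       + LL t a b c d e f x (w (Suc n)) 0 (\<delta> (Suc n)) 1 0 * BP t a b c d e f x w n 1 \<delta> ?z"
    unfolding Bel_def by simp
  also have "\<dots> = (if \<delta> (Suc n) = 1 then (1-t)*c*x * (\<Prod>i=1..n. if \<delta> i = 0 then e*x + f*w i else 0) else 0)"
  proof -
    have bz: "BP t a b c d e f x w n (Suc 0) \<delta> ?z = (\<Prod>i=1..n. if \<delta> i = 0 then e*x + f*w i else 0)"
      by (rule BP_one_zero) auto
    show ?thesis using assms bz by (simp add: Lel_def)
  qed
  also have "\<dots> = (if \<delta> (Suc n) = 1 then ((1-t)*c*x * (\<Prod>i=1..n. e*x + f*w i)) * Omega n \<delta> else 0)"
    by (simp add: prod_if_all Omega_def)
  finally show ?thesis .
qed

lemma freeze_step: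
  assumes loc: "local_fn n \<psi>'" and rel: "\<And>\<beta>. \<psi> \<beta> = (if \<beta> (Suc n) = 1 then \<psi>' \<beta> else 0)"
  shows "BO t a b c d e f (Suc n) y w \<psi> \<delta> =
    (if \<delta> (Suc n) = 1 then (a*t*y + b*w (Suc n)) * BO t a b c d e f n y w \<psi>' \<delta> else 0)"
proof -
  have "BO t a b c d e f (Suc n) y w \<psi> \<delta> =
     (\<Sum>\<beta>\<in>configs n. BL t a b c d e f (Suc n) y w \<delta> (\<beta>(Suc n := 0)) * \<psi> (\<beta>(Suc n := 0))
        + BL t a b c d e f (Suc n) y w \<delta> (\<beta>(Suc n := 1)) * \<psi> (\<beta>(Suc n := 1)))"
    unfolding Bop_def by (rule configs_Suc_sum)
  also have "\<dots> = (\<Sum>\<beta>\<in>configs n. (if \<delta> (Suc n) = 1 then (a*t*y + b*w (Suc n)) else 0) *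
        (BL t a b c d e f n y w \<delta> \<beta> * \<psi>' \<beta>))"
  proof (intro sum.cong refl)
    fix \<beta> assume "\<beta> \<in> configs n"
    have p1: "\<psi> (\<beta>(Suc n := 0)) = 0" using rel by simp
    have p2: "\<psi> (\<beta>(Suc n := 1)) = \<psi>' \<beta>"
      using rel[of "\<beta>(Suc n := 1)"] loc unfolding local_fn_def by auto
    have bp: "BP t a b c d e f y w n \<alpha> \<delta> (\<beta>(Suc n := Suc 0)) = BP t a b c d e f y w n \<alpha> \<delta> \<beta>" for \<alpha>
      by (rule Bpart_cong) auto
    have "BL t a b c d e f (Suc n) y w \<delta> (\<beta>(Suc n := 1)) =
       (if \<delta> (Suc n) = 1 then (a*t*y + b*w (Suc n)) else 0) * BL t a b c d e f n y w \<delta> \<beta>"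
      unfolding Bel_def by (simp add: bp Lel_def)
    then show "BL t a b c d e f (Suc n) y w \<delta> (\<beta>(Suc n := 0)) * \<psi> (\<beta>(Suc n := 0))
        + BL t a b c d e f (Suc n) y w \<delta> (\<beta>(Suc n := 1)) * \<psi> (\<beta>(Suc n := 1)) =
       (if \<delta> (Suc n) = 1 then (a*t*y + b*w (Suc n)) else 0) * (BL t a b c d e f n y w \<delta> \<beta> * \<psi>' \<beta>)"
      using p1 p2 by simp
  qed
  also have "\<dots> = (if \<delta> (Suc n) = 1 then (a*t*y + b*w (Suc n)) * BO t a b c d e f n y w \<psi>' \<delta> else 0)"
    unfolding Bop_def by (simp add: sum_distrib_left)
  finally show ?thesis .
qed

lemma freeze_list:
  assumes loc: "local_fn n \<psi>'" and rel: "\<And>\<beta>. \<psi> \<beta> = (if \<beta> (Suc n) = 1 then \<psi>' \<beta> else 0)"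
  shows "foldr (\<lambda>j \<psi>. BO t a b c d e f (Suc n) (u j) w \<psi>) js \<psi> \<delta> =
    (if \<delta> (Suc n) = 1 then (\<Prod>j\<leftarrow>js. a*t*u j + b*w (Suc n)) *
        foldr (\<lambda>j \<psi>. BO t a b c d e f n (u j) w \<psi>) js \<psi>' \<delta> else 0)"
proof (induction js arbitrary: \<delta>)
  case Nil
  then show ?case using rel by simp
next
  case (Cons j js)
  let ?P = "(\<Prod>j\<leftarrow>js. a*t*u j + b*w (Suc n))"
  let ?F = "foldr (\<lambda>j \<psi>. BO t a b c d e f n (u j) w \<psi>) js \<psi>'"
  have l: "local_fn n (\<lambda>\<beta>. ?P * ?F \<beta>)"
    by (rule local_scale, rule local_foldr, rule loc)
  have "foldr (\<lambda>j \<psi>. BO t a b c d e f (Suc n) (u j) w \<psi>) (j # js) \<psi> \<delta> =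
     BO t a b c d e f (Suc n) (u j) w (foldr (\<lambda>j \<psi>. BO t a b c d e f (Suc n) (u j) w \<psi>) js \<psi>) \<delta>"
    by simp
  also have "\<dots> = (if \<delta> (Suc n) = 1 then (a*t*u j + b*w (Suc n)) * BO t a b c d e f n (u j) w (\<lambda>\<beta>. ?P * ?F \<beta>) \<delta> else 0)"
    by (rule freeze_step[OF l]) (use Cons.IH in auto)
  also have "\<dots> = (if \<delta> (Suc n) = 1 then (\<Prod>j\<leftarrow>j#js. a*t*u j + b*w (Suc n)) *
        foldr (\<lambda>j \<psi>. BO t a b c d e f n (u j) w \<psi>) (j#js) \<psi>' \<delta> else 0)"
    by (simp add: Bop_scale)
  finally show ?case .
qed

lemma Zpf_freeze:
  assumes "a * u (Suc n) + b * w (Suc n) = 0"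
  shows "ZZ t a b c d e f (Suc n) u w = (1-t)*c*u (Suc n) * (\<Prod>i=1..n. e*u (Suc n) + f*w i)
     * (\<Prod>j=1..n. a*t*u j + b*w (Suc n)) * ZZ t a b c d e f n u w"
proof -
  let ?K = "(1-t)*c*u (Suc n) * (\<Prod>i=1..n. e*u (Suc n) + f*w i)"
  let ?one = "(\<lambda>i\<in>{1..Suc n}. 1::nat)"
  have l: "local_fn n (\<lambda>\<beta>. ?K * Omega n \<beta>)" by (rule local_scale, rule local_Omega)
  have "ZZ t a b c d e f (Suc n) u w = foldr (\<lambda>j \<psi>. BO t a b c d e f (Suc n) (u j) w \<psi>) [1..<Suc n]
      (BO t a b c d e f (Suc n) (u (Suc n)) w (Omega (Suc n))) ?one"
    by (rule Zpf_split)
  also have "\<dots> = (\<Prod>j\<leftarrow>[1..<Suc n]. a*t*u j + b*w (Suc n)) *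
        foldr (\<lambda>j \<psi>. BO t a b c d e f n (u j) w \<psi>) [1..<Suc n] (\<lambda>\<beta>. ?K * Omega n \<beta>) ?one"
    by (subst freeze_list[OF l]) (auto simp: freeze_base[of "u (Suc n)" w n, OF assms])
  also have "\<dots> = (\<Prod>j\<leftarrow>[1..<Suc n]. a*t*u j + b*w (Suc n)) * ?K *
        foldr (\<lambda>j \<psi>. BO t a b c d e f n (u j) w \<psi>) [1..<Suc n] (Omega n) ?one"
    by (simp add: foldr_Bop_scale)
  also have "foldr (\<lambda>j \<psi>. BO t a b c d e f n (u j) w \<psi>) [1..<Suc n] (Omega n) ?one = ZZ t a b c d e f n u w"
  proof -
    have "local_fn n (foldr (\<lambda>j \<psi>. BO t a b c d e f n (u j) w \<psi>) [1..<Suc n] (Omega n))"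
      by (rule local_foldr, rule local_Omega)
    then show ?thesis unfolding Zpf_def local_fn_def by auto
  qed
  also have "(\<Prod>j\<leftarrow>[1..<Suc n]. a*t*u j + b*w (Suc n)) = (\<Prod>j=1..n. a*t*u j + b*w (Suc n))"
  proof -
    have "(\<Prod>j\<leftarrow>[1..<Suc n]. a*t*u j + b*w (Suc n)) = (\<Prod>j\<in>set [1..<Suc n]. a*t*u j + b*w (Suc n))"
      by (rule prod.distinct_set_conv_list[symmetric]) simp
    also have "set [1..<Suc n] = {1..n}" by auto
    finally show ?thesis .
  qed
  finally show ?thesis by (simp add: mult_ac)
qed

end


definition Rm :: "complex \<Rightarrow> complex \<Rightarrow> complex \<Rightarrow> complex \<Rightarrow> complex \<Rightarrow> complex \<Rightarrow> complex
   \<Rightarrow> nat \<Rightarrow> nat \<Rightarrow> nat \<Rightarrow> nat \<Rightarrow> complex" where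
  "Rm t a b c d w1 w2 d1 d2 x y =
    (if (d1,d2,x,y) = (0,0,0,0) then a*b*c*d*(t*w2 - w1)
     else if (d1,d2,x,y) = (1,1,1,1) then a*b*c*d*(t*w2 - w1)
     else if (d1,d2,x,y) = (0,1,0,1) then a*b*c*d*(t-1)*w2
     else if (d1,d2,x,y) = (1,0,1,0) then a*b*c*d*(t-1)*w1
     else if (d1,d2,x,y) = (0,1,1,0) then t*(c*d)^2*(w1-w2)
     else if (d1,d2,x,y) = (1,0,0,1) then (a*b)^2*(w1-w2)
     else 0)"

lemma RLL:
  fixes t a b c d e f u w1 w2 :: complex
  assumes "a \<noteq> 0" "b \<noteq> 0" "c*d + a*f = 0" "t*c*d + b*e = 0"
    and bits: "ap \<in> {0,1}" "al \<in> {0,1}" "d1 \<in> {0,1}" "d2 \<in> {0,1}" "b1 \<in> {0,1}" "b2 \<in> {0,1}"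
  shows "(\<Sum>x\<in>{0,1}. \<Sum>y\<in>{0,1}. Rm t a b c d w1 w2 d1 d2 x y *
      (\<Sum>m\<in>{0,1}. Lel t a b c d e f u w2 ap y m b2 * Lel t a b c d e f u w1 m x al b1))
   = (\<Sum>x\<in>{0,1}. \<Sum>y\<in>{0,1}. (\<Sum>m\<in>{0,1}. Lel t a b c d e f u w1 ap d2 m y * Lel t a b c d e f u w2 m d1 al x)
      * Rm t a b c d w1 w2 x y b1 b2)"
proof -
  have e: "e = -t*c*d/b"
  proof -
    have "b*e = -(t*c*d)" using assms(4) by (simp add: eq_neg_iff_add_eq_0 add.commute)
    then show ?thesis using assms(2) by (simp add: field_simps)
  qed
  have f: "f = -c*d/a"
  proof -
    have "a*f = -(c*d)" using assms(3) by (simp add: eq_neg_iff_add_eq_0 add.commute)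
    then show ?thesis using assms(1) by (simp add: field_simps)
  qed
  show ?thesis using bits
    apply (simp only: insert_iff singleton_iff empty_iff simp_thms)
    apply (elim disjE)
    apply (simp_all add: Lel_def Rm_def)
    apply (simp_all add: e f field_simps power2_eq_square assms(1,2))
    done
qed



lemma sum3_swap:
  fixes R :: "'x \<Rightarrow> 'y \<Rightarrow> complex"
  shows "(\<Sum>x\<in>X. \<Sum>y\<in>Y. R x y * (\<Sum>a\<in>A. L a * B a x y)) = (\<Sum>a\<in>A. L a * (\<Sum>x\<in>X. \<Sum>y\<in>Y. R x y * B a x y))"
proof -
  have "(\<Sum>x\<in>X. \<Sum>y\<in>Y. R x y * (\<Sum>a\<in>A. L a * B a x y)) = (\<Sum>x\<in>X. \<Sum>y\<in>Y. \<Sum>a\<in>A. L a * (R x y * B a x y))"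
    by (simp add: sum_distrib_left mult_ac)
  also have "\<dots> = (\<Sum>x\<in>X. \<Sum>a\<in>A. \<Sum>y\<in>Y. L a * (R x y * B a x y))"
    by (rule sum.cong[OF refl], rule sum.swap)
  also have "\<dots> = (\<Sum>a\<in>A. \<Sum>x\<in>X. \<Sum>y\<in>Y. L a * (R x y * B a x y))"
    by (rule sum.swap)
  also have "\<dots> = (\<Sum>a\<in>A. L a * (\<Sum>x\<in>X. \<Sum>y\<in>Y. R x y * B a x y))"
    by (simp add: sum_distrib_left)
  finally show ?thesis .
qed

lemma sum3_swap':
  fixes R :: "'x \<Rightarrow> 'y \<Rightarrow> complex"
  shows "(\<Sum>x\<in>X. \<Sum>y\<in>Y. (\<Sum>a\<in>A. L a * B a x y) * R x y) = (\<Sum>a\<in>A. L a * (\<Sum>x\<in>X. \<Sum>y\<in>Y. B a x y * R x y))"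
proof -
  have "(\<Sum>x\<in>X. \<Sum>y\<in>Y. (\<Sum>a\<in>A. L a * B a x y) * R x y) = (\<Sum>x\<in>X. \<Sum>y\<in>Y. R x y * (\<Sum>a\<in>A. L a * B a x y))"
    by (simp add: mult.commute)
  also have "\<dots> = (\<Sum>a\<in>A. L a * (\<Sum>x\<in>X. \<Sum>y\<in>Y. R x y * B a x y))" by (rule sum3_swap)
  finally show ?thesis by (simp add: mult.commute)
qed

lemma BP_inter:
  assumes ab: "a \<noteq> 0" "b \<noteq> 0" "c*d + a*f = 0" "t*c*d + b*e = 0"
    and k: "1 \<le> k" "Suc k \<le> n"
    and bits: "\<delta> k \<in> {0,1}" "\<delta> (Suc k) \<in> {0,1}" "\<beta> k \<in> {0,1}" "\<beta> (Suc k) \<in> {0,1}"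
  shows "ap \<in> {0,1} \<Longrightarrow> (\<Sum>x\<in>{0,1}. \<Sum>y\<in>{0,1}. Rm t a b c d (w k) (w (Suc k)) (\<delta> k) (\<delta> (Suc k)) x y *
       BP t a b c d e f u w n ap (\<delta>(k:=x, Suc k:=y)) \<beta>)
   = (\<Sum>x\<in>{0,1}. \<Sum>y\<in>{0,1}. BP t a b c d e f u (w(k := w (Suc k), Suc k := w k)) n ap \<delta> (\<beta>(k:=x, Suc k:=y))
       * Rm t a b c d (w k) (w (Suc k)) x y (\<beta> k) (\<beta> (Suc k)))"
  using k(2)
proof (induction n arbitrary: ap rule: nat_induct_at_least)
  case base
  obtain m where m: "k = Suc m" using k(1) by (cases k) auto
  let ?w' = "w(k := w (Suc k), Suc k := w k)"
  define P where "P \<alpha> = BP t a b c d e f u w m \<alpha> \<delta> \<beta>" for \<alpha>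
  have h1: "BP t a b c d e f u w m \<alpha> (\<delta>(k:=x, Suc k:=y)) \<beta> = P \<alpha>" for \<alpha> x y
    unfolding P_def by (rule Bpart_cong) (auto simp: m)
  have h2: "BP t a b c d e f u ?w' m \<alpha> \<delta> (\<beta>(k:=x, Suc k:=y)) = P \<alpha>" for \<alpha> x y
    unfolding P_def by (rule Bpart_cong) (auto simp: m)
  have unf: "BP t a b c d e f u W (Suc k) ap D B = (\<Sum>\<alpha>'\<in>{0,1}. LL t a b c d e f u (W (Suc k)) ap (D (Suc k)) \<alpha>' (B (Suc k)) *
      (\<Sum>\<alpha>\<in>{0,1}. LL t a b c d e f u (W k) \<alpha>' (D k) \<alpha> (B k) * BP t a b c d e f u W m \<alpha> D B))" for W D B
    by (simp add: m)
  define RL where "RL \<alpha> = (\<Sum>x\<in>{0,1}. \<Sum>y\<in>{0,1}. Rm t a b c d (w k) (w (Suc k)) (\<delta> k) (\<delta> (Suc k)) x y *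
      (\<Sum>m\<in>{0,1}. Lel t a b c d e f u (w (Suc k)) ap y m (\<beta> (Suc k)) * Lel t a b c d e f u (w k) m x \<alpha> (\<beta> k)))" for \<alpha>
  define RR where "RR \<alpha> = (\<Sum>x\<in>{0,1}. \<Sum>y\<in>{0,1}. (\<Sum>m\<in>{0,1}. Lel t a b c d e f u (w k) ap (\<delta> (Suc k)) m y * Lel t a b c d e f u (w (Suc k)) m (\<delta> k) \<alpha> x)
      * Rm t a b c d (w k) (w (Suc k)) x y (\<beta> k) (\<beta> (Suc k)))" for \<alpha>
  have eq: "RL \<alpha> = RR \<alpha>" if "\<alpha> \<in> {0,1}" for \<alpha>
    unfolding RL_def RR_def by (rule RLL) (use ab bits base that in auto)
  have "(\<Sum>x\<in>{0,1}. \<Sum>y\<in>{0,1}. Rm t a b c d (w k) (w (Suc k)) (\<delta> k) (\<delta> (Suc k)) x y *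
       BP t a b c d e f u w (Suc k) ap (\<delta>(k:=x, Suc k:=y)) \<beta>) = (\<Sum>\<alpha>\<in>{0,1}. P \<alpha> * RL \<alpha>)"
    unfolding unf h1 RL_def by (simp add: algebra_simps m)
  also have "\<dots> = (\<Sum>\<alpha>\<in>{0,1}. P \<alpha> * RR \<alpha>)" using eq by simp
  also have "\<dots> = (\<Sum>x\<in>{0,1}. \<Sum>y\<in>{0,1}. BP t a b c d e f u ?w' (Suc k) ap \<delta> (\<beta>(k:=x, Suc k:=y))
       * Rm t a b c d (w k) (w (Suc k)) x y (\<beta> k) (\<beta> (Suc k)))"
    unfolding unf h2 RR_def by (simp add: algebra_simps m)
  finally show ?case .
next
  case (Suc n)
  let ?w' = "w(k := w (Suc k), Suc k := w k)"
  have unf: "BP t a b c d e f u W (Suc n) ap D B = (\<Sum>\<alpha>\<in>{0,1}. LL t a b c d e f u (W (Suc n)) ap (D (Suc n)) \<alpha> (B (Suc n)) *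
       BP t a b c d e f u W n \<alpha> D B)" for W D B
    by simp
  have ne: "Suc n \<noteq> k" "Suc n \<noteq> Suc k" using Suc.hyps by auto
  have dd: "(g(k:=x, Suc k:=y)) (Suc n) = g (Suc n)" for g :: "nat \<Rightarrow> 'z" and x y using ne by simp
  have "(\<Sum>x\<in>{0,1}. \<Sum>y\<in>{0,1}. Rm t a b c d (w k) (w (Suc k)) (\<delta> k) (\<delta> (Suc k)) x y *
       BP t a b c d e f u w (Suc n) ap (\<delta>(k:=x, Suc k:=y)) \<beta>) =
     (\<Sum>\<alpha>\<in>{0,1}. LL t a b c d e f u (w (Suc n)) ap (\<delta> (Suc n)) \<alpha> (\<beta> (Suc n)) *
       (\<Sum>x\<in>{0,1}. \<Sum>y\<in>{0,1}. Rm t a b c d (w k) (w (Suc k)) (\<delta> k) (\<delta> (Suc k)) x y *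
       BP t a b c d e f u w n \<alpha> (\<delta>(k:=x, Suc k:=y)) \<beta>))"
    unfolding unf dd by (rule sum3_swap)
  also have "\<dots> = (\<Sum>\<alpha>\<in>{0,1}. LL t a b c d e f u (w (Suc n)) ap (\<delta> (Suc n)) \<alpha> (\<beta> (Suc n)) *
       (\<Sum>x\<in>{0,1}. \<Sum>y\<in>{0,1}. BP t a b c d e f u ?w' n \<alpha> \<delta> (\<beta>(k:=x, Suc k:=y))
       * Rm t a b c d (w k) (w (Suc k)) x y (\<beta> k) (\<beta> (Suc k))))"
    by (intro sum.cong refl arg_cong2[where f="(*)"] Suc.IH) auto
  also have "\<dots> = (\<Sum>x\<in>{0,1}. \<Sum>y\<in>{0,1}. BP t a b c d e f u ?w' (Suc n) ap \<delta> (\<beta>(k:=x, Suc k:=y))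
       * Rm t a b c d (w k) (w (Suc k)) x y (\<beta> k) (\<beta> (Suc k)))"
    unfolding unf dd by (rule sum3_swap'[symmetric])
  finally show ?case .
qed


definition agree2 :: "nat \<Rightarrow> (nat \<Rightarrow> nat) \<Rightarrow> (nat \<Rightarrow> nat) \<Rightarrow> bool" where
  "agree2 k \<beta> \<gamma> \<longleftrightarrow> (\<forall>i. i \<noteq> k \<and> i \<noteq> Suc k \<longrightarrow> \<beta> i = \<gamma> i)"

lemma upd2_configs:
  assumes "\<beta> \<in> configs N" "1 \<le> k" "Suc k \<le> N" "x \<in> {0,1}" "y \<in> {0,1}"
  shows "\<beta>(k:=x, Suc k:=y) \<in> configs N"
  using assms unfolding configs_def by (auto simp: PiE_def extensional_def Pi_def)

lemma pair_sum:
  assumes "\<beta> \<in> configs N" "1 \<le> k" "Suc k \<le> N"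
  shows "(\<Sum>x\<in>{0,1}. \<Sum>y\<in>{0,1}. H (\<beta>(k:=x, Suc k:=y))) = (\<Sum>\<gamma>\<in>configs N. if agree2 k \<beta> \<gamma> then H \<gamma> else (0::complex))"
proof -
  let ?g = "\<lambda>(x,y). \<beta>(k:=x, Suc k:=y)"
  have set: "{\<gamma>\<in>configs N. agree2 k \<beta> \<gamma>} = ?g ` ({0,1} \<times> {0,1})"
  proof
    show "?g ` ({0,1} \<times> {0,1}) \<subseteq> {\<gamma>\<in>configs N. agree2 k \<beta> \<gamma>}"
      using upd2_configs[OF assms] by (auto simp: agree2_def)
  next
    show "{\<gamma>\<in>configs N. agree2 k \<beta> \<gamma>} \<subseteq> ?g ` ({0,1} \<times> {0,1})"
    proof
      fix \<gamma> assume g: "\<gamma> \<in> {\<gamma>\<in>configs N. agree2 k \<beta> \<gamma>}"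
      then have "\<gamma> = \<beta>(k:=\<gamma> k, Suc k:=\<gamma> (Suc k))"
        by (auto simp: agree2_def fun_eq_iff)
      moreover have "\<gamma> k \<in> {0,1}" "\<gamma> (Suc k) \<in> {0,1}"
        using g assms configs_mem[of \<gamma> N k] configs_mem[of \<gamma> N "Suc k"] by auto
      ultimately show "\<gamma> \<in> ?g ` ({0,1} \<times> {0,1})" by (auto intro!: image_eqI[of _ _ "(\<gamma> k, \<gamma> (Suc k))"])
    qed
  qed
  have inj: "inj_on ?g ({0,1} \<times> {0,1})"
    by (auto simp: inj_on_def fun_eq_iff)
  have "(\<Sum>\<gamma>\<in>configs N. if agree2 k \<beta> \<gamma> then H \<gamma> else 0) = (\<Sum>\<gamma>\<in>{\<gamma>\<in>configs N. agree2 k \<beta> \<gamma>}. H \<gamma>)"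
    by (simp add: sum.inter_filter)
  also have "\<dots> = (\<Sum>p\<in>{0,1} \<times> {0,1}. H (?g p))"
    unfolding set by (subst sum.reindex[OF inj]) (simp add: o_def)
  also have "\<dots> = (\<Sum>x\<in>{0,1}. \<Sum>y\<in>{0,1}. H (\<beta>(k:=x, Suc k:=y)))"
    unfolding sum.cartesian_product by (simp add: case_prod_unfold)
  finally show ?thesis by simp
qed

lemma pairswap:
  fixes G :: "(nat \<Rightarrow> nat) \<Rightarrow> (nat \<Rightarrow> nat) \<Rightarrow> complex"
  assumes "1 \<le> k" "Suc k \<le> N"
  shows "(\<Sum>\<beta>\<in>configs N. \<Sum>x\<in>{0,1}. \<Sum>y\<in>{0,1}. G \<beta> (\<beta>(k:=x, Suc k:=y))) =
         (\<Sum>\<beta>\<in>configs N. \<Sum>x\<in>{0,1}. \<Sum>y\<in>{0,1}. G (\<beta>(k:=x, Suc k:=y)) \<beta>)"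
proof -
  have "(\<Sum>\<beta>\<in>configs N. \<Sum>x\<in>{0,1}. \<Sum>y\<in>{0,1}. G \<beta> (\<beta>(k:=x, Suc k:=y))) =
        (\<Sum>\<beta>\<in>configs N. \<Sum>\<gamma>\<in>configs N. if agree2 k \<beta> \<gamma> then G \<beta> \<gamma> else 0)"
    by (rule sum.cong[OF refl], rule pair_sum) (use assms in auto)
  also have "\<dots> = (\<Sum>\<gamma>\<in>configs N. \<Sum>\<beta>\<in>configs N. if agree2 k \<beta> \<gamma> then G \<beta> \<gamma> else 0)"
    by (rule sum.swap)
  also have "\<dots> = (\<Sum>\<gamma>\<in>configs N. \<Sum>\<beta>\<in>configs N. if agree2 k \<gamma> \<beta> then G \<beta> \<gamma> else 0)"
    by (intro sum.cong refl) (auto simp: agree2_def)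
  also have "\<dots> = (\<Sum>\<beta>\<in>configs N. \<Sum>x\<in>{0,1}. \<Sum>y\<in>{0,1}. G (\<beta>(k:=x, Suc k:=y)) \<beta>)"
    by (rule sum.cong[OF refl], rule pair_sum[symmetric]) (use assms in auto)
  finally show ?thesis .
qed

lemma swap_in: "(\<Sum>x\<in>X. \<Sum>y\<in>Y. \<Sum>\<beta>\<in>B. g x y \<beta>) = (\<Sum>\<beta>\<in>B. \<Sum>x\<in>X. \<Sum>y\<in>Y. g x y \<beta>)"
proof -
  have "(\<Sum>x\<in>X. \<Sum>y\<in>Y. \<Sum>\<beta>\<in>B. g x y \<beta>) = (\<Sum>x\<in>X. \<Sum>\<beta>\<in>B. \<Sum>y\<in>Y. g x y \<beta>)"
    by (rule sum.cong[OF refl], rule sum.swap)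
  also have "\<dots> = (\<Sum>\<beta>\<in>B. \<Sum>x\<in>X. \<Sum>y\<in>Y. g x y \<beta>)" by (rule sum.swap)
  finally show ?thesis .
qed

definition Rop :: "complex \<Rightarrow> complex \<Rightarrow> complex \<Rightarrow> complex \<Rightarrow> complex \<Rightarrow> complex \<Rightarrow> complex \<Rightarrow> nat
   \<Rightarrow> ((nat \<Rightarrow> nat) \<Rightarrow> complex) \<Rightarrow> (nat \<Rightarrow> nat) \<Rightarrow> complex" where
  "Rop t a b c d w1 w2 k \<psi> \<delta> = (\<Sum>x\<in>{0,1}. \<Sum>y\<in>{0,1}. Rm t a b c d w1 w2 (\<delta> k) (\<delta> (Suc k)) x y * \<psi> (\<delta>(k:=x, Suc k:=y)))"

lemma Bop_inter:
  assumes ab: "a \<noteq> 0" "b \<noteq> 0" "c*d + a*f = 0" "t*c*d + b*e = 0"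
    and k: "1 \<le> k" "Suc k \<le> N" and \<delta>: "\<delta> \<in> configs N"
  shows "Rop t a b c d (w k) (w (Suc k)) k (BO t a b c d e f N u w \<psi>) \<delta> =
     BO t a b c d e f N u (w(k := w (Suc k), Suc k := w k)) (Rop t a b c d (w k) (w (Suc k)) k \<psi>) \<delta>"
proof -
  let ?w' = "w(k := w (Suc k), Suc k := w k)"
  let ?R = "Rm t a b c d (w k) (w (Suc k))"
  have kk: "k \<in> {1..N}" "Suc k \<in> {1..N}" using k by auto
  have kne: "k \<noteq> Suc k" "Suc k \<noteq> k" by auto
  have "Rop t a b c d (w k) (w (Suc k)) k (BO t a b c d e f N u w \<psi>) \<delta> =
     (\<Sum>x\<in>{0,1}. \<Sum>y\<in>{0,1}. \<Sum>\<beta>\<in>configs N. ?R (\<delta> k) (\<delta> (Suc k)) x y * (BL t a b c d e f N u w (\<delta>(k:=x, Suc k:=y)) \<beta> * \<psi> \<beta>))"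
    unfolding Rop_def Bop_def by (simp only: sum_distrib_left)
  also have "\<dots> = (\<Sum>\<beta>\<in>configs N. \<Sum>x\<in>{0,1}. \<Sum>y\<in>{0,1}. ?R (\<delta> k) (\<delta> (Suc k)) x y * (BL t a b c d e f N u w (\<delta>(k:=x, Suc k:=y)) \<beta> * \<psi> \<beta>))"
    by (rule swap_in)
  also have "\<dots> = (\<Sum>\<beta>\<in>configs N. \<psi> \<beta> * (\<Sum>x\<in>{0,1}. \<Sum>y\<in>{0,1}. ?R (\<delta> k) (\<delta> (Suc k)) x y * BL t a b c d e f N u w (\<delta>(k:=x, Suc k:=y)) \<beta>))"
    by (simp only: sum_distrib_left mult_ac)
  also have "\<dots> = (\<Sum>\<beta>\<in>configs N. \<psi> \<beta> * (\<Sum>x\<in>{0,1}. \<Sum>y\<in>{0,1}. BL t a b c d e f N u ?w' \<delta> (\<beta>(k:=x, Suc k:=y)) * ?R x y (\<beta> k) (\<beta> (Suc k))))"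
  proof (rule sum.cong[OF refl])
    fix \<beta> assume \<beta>: "\<beta> \<in> configs N"
    have "(\<Sum>x\<in>{0,1}. \<Sum>y\<in>{0,1}. ?R (\<delta> k) (\<delta> (Suc k)) x y * BL t a b c d e f N u w (\<delta>(k:=x, Suc k:=y)) \<beta>) =
      (\<Sum>x\<in>{0,1}. \<Sum>y\<in>{0,1}. BL t a b c d e f N u ?w' \<delta> (\<beta>(k:=x, Suc k:=y)) * ?R x y (\<beta> k) (\<beta> (Suc k)))"
      unfolding Bel_def
      by (rule BP_inter[OF ab k]) (use \<delta> \<beta> kk configs_mem in auto)
    then show "\<psi> \<beta> * (\<Sum>x\<in>{0,1}. \<Sum>y\<in>{0,1}. ?R (\<delta> k) (\<delta> (Suc k)) x y * BL t a b c d e f N u w (\<delta>(k:=x, Suc k:=y)) \<beta>) =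
      \<psi> \<beta> * (\<Sum>x\<in>{0,1}. \<Sum>y\<in>{0,1}. BL t a b c d e f N u ?w' \<delta> (\<beta>(k:=x, Suc k:=y)) * ?R x y (\<beta> k) (\<beta> (Suc k)))"
      by simp
  qed
  also have "\<dots> = (\<Sum>\<beta>\<in>configs N. \<Sum>x\<in>{0,1}. \<Sum>y\<in>{0,1}. (\<lambda>\<beta> \<gamma>. \<psi> \<beta> * (BL t a b c d e f N u ?w' \<delta> \<gamma> * ?R (\<gamma> k) (\<gamma> (Suc k)) (\<beta> k) (\<beta> (Suc k)))) \<beta> (\<beta>(k:=x, Suc k:=y)))"
    by (simp only: sum_distrib_left fun_upd_same fun_upd_other kne not_False_eq_True)
  also have "\<dots> = (\<Sum>\<beta>\<in>configs N. \<Sum>x\<in>{0,1}. \<Sum>y\<in>{0,1}. (\<lambda>\<beta> \<gamma>. \<psi> \<beta> * (BL t a b c d e f N u ?w' \<delta> \<gamma> * ?R (\<gamma> k) (\<gamma> (Suc k)) (\<beta> k) (\<beta> (Suc k)))) (\<beta>(k:=x, Suc k:=y)) \<beta>)"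
    by (rule pairswap[OF k])
  also have "\<dots> = (\<Sum>\<beta>\<in>configs N. \<Sum>x\<in>{0,1}. \<Sum>y\<in>{0,1}. BL t a b c d e f N u ?w' \<delta> \<beta> * (?R (\<beta> k) (\<beta> (Suc k)) x y * \<psi> (\<beta>(k:=x, Suc k:=y))))"
    by (simp only: fun_upd_same fun_upd_other kne not_False_eq_True mult_ac)
  also have "\<dots> = BO t a b c d e f N u ?w' (Rop t a b c d (w k) (w (Suc k)) k \<psi>) \<delta>"
    unfolding Rop_def Bop_def by (simp only: sum_distrib_left)
  finally show ?thesis .
qed



lemma ispoly_if: "ispoly F \<Longrightarrow> ispoly G \<Longrightarrow> ispoly (\<lambda>s. if P then F s else G s)"
  by (cases P) auto

lemma pf_if: "pf n F \<Longrightarrow> pf n G \<Longrightarrow> pf n (\<lambda>s. if P then F s else G s)"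
  by (cases P) auto

lemma ispoly_id: "ispoly (\<lambda>x. x)"
  unfolding ispoly_def using pf_id by blast

context fixes t a b c d e f :: complex
begin

lemma ispoly_Lel:
  assumes "ispoly U" "ispoly W"
  shows "ispoly (\<lambda>s. LL t a b c d e f (U s) (W s) g h al be)"
proof -
  have cU: "ispoly (\<lambda>s. p * U s)" for p by (rule ispoly_mult[OF ispoly_const assms(1)])
  have cW: "ispoly (\<lambda>s. p * W s)" for p by (rule ispoly_mult[OF ispoly_const assms(2)])
  have lin: "ispoly (\<lambda>s. p * U s + q * W s)" for p q by (rule ispoly_add[OF cU cW])
  show ?thesis
    unfolding Lel_def
    by (intro ispoly_if lin cU cW ispoly_const)
qed

lemma pf_Lel: "pf 1 (\<lambda>x. LL t a b c d e f x w g h al be)"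
proof -
  have aff: "pf 1 (\<lambda>x. p * x + q)" for p q
    using pf_affine[of q p] by (simp add: add.commute)
  have aff0: "pf 1 (\<lambda>x. p * x)" for p
    using pf_affine[of 0 p] by simp
  show ?thesis
    unfolding Lel_def
    by (intro pf_if aff aff0 pf_const)
qed

lemma ispoly_Bpart:
  assumes "ispoly U" "\<And>i. ispoly (\<lambda>s. W s i)"
  shows "ispoly (\<lambda>s. BP t a b c d e f (U s) (W s) k al h be)"
proof (induction k arbitrary: al)
  case 0 then show ?case by simp
next
  case (Suc k)
  show ?case
    by (simp only: Bpart.simps, intro ispoly_sum ispoly_mult ispoly_Lel assms Suc) simp
qed

lemma pf_Bpart: "pf k (\<lambda>x. BP t a b c d e f x w k al h be)"
proof (induction k arbitrary: al)
  case 0 then show ?case by simp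
next
  case (Suc k)
  have "pf (1 + k) (\<lambda>x. \<Sum>\<alpha>\<in>{0,1}. LL t a b c d e f x (w (Suc k)) al (h (Suc k)) \<alpha> (be (Suc k)) * BP t a b c d e f x w k \<alpha> h be)"
    by (intro pf_sum pf_mult pf_Lel Suc) simp
  then show ?case by simp
qed

lemma ispoly_Bop:
  assumes "ispoly U" "\<And>i. ispoly (\<lambda>s. W s i)" "\<And>\<beta>. ispoly (\<lambda>s. \<Psi> s \<beta>)"
  shows "ispoly (\<lambda>s. BO t a b c d e f N (U s) (W s) (\<Psi> s) \<delta>)"
  unfolding Bop_def Bel_def
  by (intro ispoly_sum ispoly_mult ispoly_Bpart assms finite_configs)

lemma pf_Bop_first: "pf N (\<lambda>x. BO t a b c d e f N x w \<psi> \<delta>)"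
proof -
  have "pf (N + 0) (\<lambda>x. \<Sum>\<beta>\<in>configs N. BL t a b c d e f N x w \<delta> \<beta> * \<psi> \<beta>)"
    unfolding Bel_def by (intro pf_sum pf_mult pf_Bpart pf_const finite_configs)
  then show ?thesis unfolding Bop_def by simp
qed

lemma pf_Bop_rest: "(\<And>\<beta>. pf m (\<lambda>x. \<Psi> x \<beta>)) \<Longrightarrow> pf m (\<lambda>x. BO t a b c d e f N y w (\<Psi> x) \<delta>)"
proof -
  assume h: "\<And>\<beta>. pf m (\<lambda>x. \<Psi> x \<beta>)"
  have "pf (0 + m) (\<lambda>x. \<Sum>\<beta>\<in>configs N. BL t a b c d e f N y w \<delta> \<beta> * \<Psi> x \<beta>)"
    by (intro pf_sum pf_mult h pf_const finite_configs)
  then show ?thesis unfolding Bop_def by simp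
qed

lemma ispoly_foldr:
  assumes "\<And>j. ispoly (\<lambda>s. UU s j)" "\<And>i. ispoly (\<lambda>s. W s i)" "\<And>\<beta>. ispoly (\<lambda>s. \<Psi> s \<beta>)"
  shows "ispoly (\<lambda>s. foldr (\<lambda>j \<psi>. BO t a b c d e f N (UU s j) (W s) \<psi>) js (\<Psi> s) \<delta>)"
proof (induction js arbitrary: \<delta>)
  case Nil then show ?case using assms(3) by simp
next
  case (Cons j js)
  show ?case by (simp only: foldr_Cons o_apply, intro ispoly_Bop assms Cons)
qed

lemma pf_foldr:
  "(\<And>\<beta>. pf m (\<lambda>x. \<Psi> x \<beta>)) \<Longrightarrow> pf m (\<lambda>x. foldr (\<lambda>j \<psi>. BO t a b c d e f N (u j) w \<psi>) js (\<Psi> x) \<delta>)"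
proof (induction js arbitrary: \<delta>)
  case Nil then show ?case by simp
next
  case (Cons j js)
  show ?case by (simp only: foldr_Cons o_apply, intro pf_Bop_rest Cons)
qed

lemma ispoly_Zpf:
  assumes "\<And>j. ispoly (\<lambda>s. U s j)" "\<And>i. ispoly (\<lambda>s. W s i)"
  shows "ispoly (\<lambda>s. ZZ t a b c d e f N (U s) (W s))"
  unfolding Zpf_def by (intro ispoly_foldr assms ispoly_const)

lemma pf_Zpf: "pf (Suc n) (\<lambda>x. ZZ t a b c d e f (Suc n) (u(Suc n := x)) w)"
proof -
  have "ZZ t a b c d e f (Suc n) (u(Suc n := x)) w =
     foldr (\<lambda>j \<psi>. BO t a b c d e f (Suc n) (u j) w \<psi>) [1..<Suc n]
       (BO t a b c d e f (Suc n) x w (Omega (Suc n))) (\<lambda>i\<in>{1..Suc n}. 1)" for x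
  proof -
    have "foldr (\<lambda>j \<psi>. BO t a b c d e f (Suc n) ((u(Suc n := x)) j) w \<psi>) [1..<Suc n] \<psi>0 =
          foldr (\<lambda>j \<psi>. BO t a b c d e f (Suc n) (u j) w \<psi>) [1..<Suc n] \<psi>0" for \<psi>0
      by (rule foldr_cong[OF refl refl]) auto
    then show ?thesis unfolding Zpf_split by simp
  qed
  moreover have "pf (Suc n) (\<lambda>x. foldr (\<lambda>j \<psi>. BO t a b c d e f (Suc n) (u j) w \<psi>) [1..<Suc n]
       (BO t a b c d e f (Suc n) x w (Omega (Suc n))) (\<lambda>i\<in>{1..Suc n}. 1))"
    by (intro pf_foldr pf_Bop_first)
  ultimately show ?thesis by simp
qed

end


lemma one_config: "(\<lambda>i\<in>{1..N}. 1::nat) \<in> configs N"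
  unfolding configs_def by auto

context fixes t a b c d e f :: complex
begin

lemma foldr_cong_configs:
  "(\<And>\<beta>. \<beta> \<in> configs N \<Longrightarrow> \<psi> \<beta> = \<psi>' \<beta>) \<Longrightarrow> \<delta> \<in> configs N \<Longrightarrow>
   foldr (\<lambda>j \<psi>. BO t a b c d e f N (u j) w \<psi>) js \<psi> \<delta> = foldr (\<lambda>j \<psi>. BO t a b c d e f N (u j) w \<psi>) js \<psi>' \<delta>"
proof (induction js arbitrary: \<delta>)
  case Nil then show ?case by simp
next
  case (Cons j js)
  then show ?case by (simp add: Bop_cong_psi[of N "foldr (\<lambda>j \<psi>. BO t a b c d e f N (u j) w \<psi>) js \<psi>"])
qed

lemma Rop_foldr:
  assumes ab: "a \<noteq> 0" "b \<noteq> 0" "c*d + a*f = 0" "t*c*d + b*e = 0"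
    and k: "1 \<le> k" "Suc k \<le> N"
  shows "\<delta> \<in> configs N \<Longrightarrow> Rop t a b c d (w k) (w (Suc k)) k (foldr (\<lambda>j \<psi>. BO t a b c d e f N (u j) w \<psi>) js \<psi>) \<delta> =
     foldr (\<lambda>j \<psi>. BO t a b c d e f N (u j) (w(k := w (Suc k), Suc k := w k)) \<psi>) js (Rop t a b c d (w k) (w (Suc k)) k \<psi>) \<delta>"
proof (induction js arbitrary: \<delta>)
  case Nil then show ?case by simp
next
  case (Cons j js)
  let ?w' = "w(k := w (Suc k), Suc k := w k)"
  show ?case unfolding foldr_Cons o_apply
  proof -
    have "Rop t a b c d (w k) (w (Suc k)) k (BO t a b c d e f N (u j) w (foldr (\<lambda>j \<psi>. BO t a b c d e f N (u j) w \<psi>) js \<psi>)) \<delta> =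
       BO t a b c d e f N (u j) ?w' (Rop t a b c d (w k) (w (Suc k)) k (foldr (\<lambda>j \<psi>. BO t a b c d e f N (u j) w \<psi>) js \<psi>)) \<delta>"
      by (rule Bop_inter[OF ab k Cons.prems])
    also have "\<dots> = BO t a b c d e f N (u j) ?w' (foldr (\<lambda>j \<psi>. BO t a b c d e f N (u j) ?w' \<psi>) js (Rop t a b c d (w k) (w (Suc k)) k \<psi>)) \<delta>"
      by (rule arg_cong[where f="\<lambda>g. g \<delta>"], rule Bop_cong_psi, rule Cons.IH)
    finally show "Rop t a b c d (w k) (w (Suc k)) k (BO t a b c d e f N (u j) w (foldr (\<lambda>j \<psi>. BO t a b c d e f N (u j) w \<psi>) js \<psi>)) \<delta> =
       BO t a b c d e f N (u j) ?w' (foldr (\<lambda>j \<psi>. BO t a b c d e f N (u j) ?w' \<psi>) js (Rop t a b c d (w k) (w (Suc k)) k \<psi>)) \<delta>" .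
  qed
qed

lemma Rop_Omega:
  assumes k: "1 \<le> k" "Suc k \<le> N" and \<delta>: "\<delta> \<in> configs N"
  shows "Rop t a b c d w1 w2 k (Omega N) \<delta> = a*b*c*d*(t*w2 - w1) * Omega N \<delta>"
proof -
  have kk: "k \<in> {1..N}" "Suc k \<in> {1..N}" using k by auto
  have bits: "\<delta> k \<in> {0,1}" "\<delta> (Suc k) \<in> {0,1}" using configs_mem[OF \<delta>] kk by auto
  have om: "Omega N (\<delta>(k:=x, Suc k:=y)) = (if x = 0 \<and> y = 0 \<and> (\<forall>i\<in>{1..N}. i \<noteq> k \<and> i \<noteq> Suc k \<longrightarrow> \<delta> i = 0) then 1 else 0)" for x y
    unfolding Omega_def using kk by auto
  have om2: "Omega N \<delta> = (if \<delta> k = 0 \<and> \<delta> (Suc k) = 0 \<and> (\<forall>i\<in>{1..N}. i \<noteq> k \<and> i \<noteq> Suc k \<longrightarrow> \<delta> i = 0) then 1 else 0)"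
  proof -
    have "(\<forall>i\<in>{1..N}. \<delta> i = 0) \<longleftrightarrow> (\<delta> k = 0 \<and> \<delta> (Suc k) = 0 \<and> (\<forall>i\<in>{1..N}. i \<noteq> k \<and> i \<noteq> Suc k \<longrightarrow> \<delta> i = 0))"
      using kk by metis
    then show ?thesis unfolding Omega_def by simp
  qed
  show ?thesis
    unfolding Rop_def om om2 using bits by (elim insertE emptyE) (simp_all add: Rm_def)
qed

lemma Rop_one:
  assumes k: "1 \<le> k" "Suc k \<le> N"
  shows "Rop t a b c d w1 w2 k \<phi> (\<lambda>i\<in>{1..N}. 1) = a*b*c*d*(t*w2 - w1) * \<phi> (\<lambda>i\<in>{1..N}. 1)"
proof -
  have kk: "k \<in> {1..N}" "Suc k \<in> {1..N}" using k by auto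
  have "(\<lambda>i\<in>{1..N}. 1::nat)(k := 1, Suc k := 1) = (\<lambda>i\<in>{1..N}. 1::nat)"
    using kk by (auto simp: fun_eq_iff)
  then show ?thesis unfolding Rop_def using kk by (simp add: Rm_def)
qed

lemma Zpf_swap_generic:
  assumes ab: "a \<noteq> 0" "b \<noteq> 0" "c \<noteq> 0" "d \<noteq> 0" "c*d + a*f = 0" "t*c*d + b*e = 0"
    and k: "1 \<le> k" "Suc k \<le> N" and gen: "t * w (Suc k) - w k \<noteq> 0"
  shows "ZZ t a b c d e f N u w = ZZ t a b c d e f N u (w(k := w (Suc k), Suc k := w k))"
proof -
  let ?w' = "w(k := w (Suc k), Suc k := w k)"
  let ?one = "(\<lambda>i\<in>{1..N}. 1::nat)"
  let ?r = "a*b*c*d*(t * w (Suc k) - w k)"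
  let ?F = "\<lambda>w. foldr (\<lambda>j \<psi>. BO t a b c d e f N (u j) w \<psi>) [1..<Suc N]"
  have "?r * ZZ t a b c d e f N u w = Rop t a b c d (w k) (w (Suc k)) k (?F w (Omega N)) ?one"
    unfolding Zpf_def by (rule Rop_one[OF k, symmetric])
  also have "\<dots> = ?F ?w' (Rop t a b c d (w k) (w (Suc k)) k (Omega N)) ?one"
    by (rule Rop_foldr[OF ab(1,2,5,6) k one_config])
  also have "\<dots> = ?F ?w' (\<lambda>\<beta>. ?r * Omega N \<beta>) ?one"
    by (rule foldr_cong_configs[OF _ one_config], rule Rop_Omega[OF k])
  also have "\<dots> = ?r * ZZ t a b c d e f N u ?w'"
    unfolding Zpf_def by (rule foldr_Bop_scale)
  finally show ?thesis using ab gen by simp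
qed

lemma Zpf_swap:
  assumes ab: "a \<noteq> 0" "b \<noteq> 0" "c \<noteq> 0" "d \<noteq> 0" "c*d + a*f = 0" "t*c*d + b*e = 0"
    and k: "1 \<le> k" "Suc k \<le> N"
  shows "ZZ t a b c d e f N u w = ZZ t a b c d e f N u (w(k := w (Suc k), Suc k := w k))"
proof -
  define D where "D s = ZZ t a b c d e f N u (w(k := s)) - ZZ t a b c d e f N u (w(k := w (Suc k), Suc k := s))" for s
  have kne: "k \<noteq> Suc k" by simp
  have pw: "ispoly (\<lambda>s. (w(k := s)) i)" for i by (cases "i = k") (auto simp: ispoly_id)
  have pw2: "ispoly (\<lambda>s. (w(k := w (Suc k), Suc k := s)) i)" for i by (cases "i = Suc k") (auto simp: ispoly_id)
  have pD: "ispoly D"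
    unfolding D_def by (intro ispoly_diff ispoly_Zpf pw pw2 ispoly_const)
  have z: "D s = 0" if "s \<noteq> t * w (Suc k)" for s
  proof -
    have "ZZ t a b c d e f N u (w(k := s)) = ZZ t a b c d e f N u ((w(k := s))(k := (w(k := s)) (Suc k), Suc k := (w(k := s)) k))"
      by (rule Zpf_swap_generic[OF ab k]) (use that kne in auto)
    also have "(w(k := s))(k := (w(k := s)) (Suc k), Suc k := (w(k := s)) k) = w(k := w (Suc k), Suc k := s)"
      using kne by (auto simp: fun_eq_iff)
    finally have eq: "ZZ t a b c d e f N u (w(k := s)) = ZZ t a b c d e f N u (w(k := w (Suc k), Suc k := s))" .
    show ?thesis unfolding D_def by (simp only: eq diff_self)
  qed
  have "infinite (UNIV - {t * w (Suc k)})" by (simp add: infinite_UNIV_char_0)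
  then have "infinite {s. D s = 0}" by (rule infinite_super[rotated]) (auto intro: z)
  then have "D (w k) = 0" by (rule ispoly_zero[OF pD])
  moreover have "w(k := w k) = w" by simp
  ultimately show ?thesis unfolding D_def by simp
qed

end


definition DU :: "nat \<Rightarrow> (nat \<Rightarrow> complex) \<Rightarrow> complex" where
  "DU n u = (\<Prod>j=1..n. \<Prod>k\<in>{j<..n}. (u j - u k))"
definition DW :: "nat \<Rightarrow> (nat \<Rightarrow> complex) \<Rightarrow> complex" where
  "DW n w = (\<Prod>j=1..n. \<Prod>k\<in>{j<..n}. (w k - w j))"

lemma DU_Suc: "DU (Suc n) u = DU n u * (\<Prod>j=1..n. (u j - u (Suc n)))"
proof -
  have "DU (Suc n) u = (\<Prod>j=1..n. \<Prod>k\<in>{j<..Suc n}. (u j - u k)) * (\<Prod>k\<in>{Suc n<..Suc n}. (u (Suc n) - u k))"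
    unfolding DU_def by (simp add: prod.nat_ivl_Suc' mult.commute)
  also have "\<dots> = (\<Prod>j=1..n. (\<Prod>k\<in>{j<..n}. (u j - u k)) * (u j - u (Suc n)))"
  proof -
    have "{j<..Suc n} = insert (Suc n) {j<..n}" if "j \<le> n" for j using that by auto
    then show ?thesis by (simp add: mult.commute)
  qed
  finally show ?thesis unfolding DU_def by (simp add: prod.distrib)
qed

lemma DW_Suc: "DW (Suc n) w = DW n w * (\<Prod>j=1..n. (w (Suc n) - w j))"
proof -
  have "DW (Suc n) w = (\<Prod>j=1..n. \<Prod>k\<in>{j<..Suc n}. (w k - w j)) * (\<Prod>k\<in>{Suc n<..Suc n}. (w k - w (Suc n)))"
    unfolding DW_def by (simp add: prod.nat_ivl_Suc' mult.commute)
  also have "\<dots> = (\<Prod>j=1..n. (\<Prod>k\<in>{j<..n}. (w k - w j)) * (w (Suc n) - w j))"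
  proof -
    have "{j<..Suc n} = insert (Suc n) {j<..n}" if "j \<le> n" for j using that by auto
    then show ?thesis by (simp add: mult.commute)
  qed
  finally show ?thesis unfolding DW_def by (simp add: prod.distrib)
qed

definition sw :: "nat \<Rightarrow> nat \<Rightarrow> nat" where
  "sw k x = (if x = k then Suc k else if x = Suc k then k else x)"

lemma sw_sw[simp]: "sw k (sw k x) = x" unfolding sw_def by auto

lemma upd_sw: "w(k := w (Suc k), Suc k := w k) = w \<circ> sw k"
  unfolding sw_def by (auto simp: fun_eq_iff)

lemma DW_pairs: "DW n w = (\<Prod>p\<in>Sigma {1..n} (\<lambda>j. {j<..n}). w (snd p) - w (fst p))"
  unfolding DW_def by (subst prod.Sigma) (auto simp: case_prod_unfold)

lemma DW_swap:
  assumes k: "1 \<le> k" "Suc k \<le> n"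
  shows "DW n (w \<circ> sw k) = - DW n w"
proof -
  let ?P = "Sigma {1..n} (\<lambda>j. {j<..n})"
  let ?P' = "?P - {(k, Suc k)}"
  let ?g = "\<lambda>p. w (snd p) - w (fst p)"
  let ?\<phi> = "\<lambda>p. (sw k (fst p), sw k (snd p))"
  have mem: "(k, Suc k) \<in> ?P" using k by auto
  have bij: "bij_betw ?\<phi> ?P' ?P'"
  proof (rule bij_betwI[where g="?\<phi>"])
    show "?\<phi> \<in> ?P' \<rightarrow> ?P'" using k by (auto simp: sw_def split: if_splits)
    show "?\<phi> \<in> ?P' \<rightarrow> ?P'" using k by (auto simp: sw_def split: if_splits)
  qed auto
  have "DW n (w \<circ> sw k) = (\<Prod>p\<in>?P. ?g (?\<phi> p))" unfolding DW_pairs by simp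
  also have "\<dots> = ?g (?\<phi> (k, Suc k)) * (\<Prod>p\<in>?P'. ?g (?\<phi> p))"
    using mem by (subst prod.remove[of _ "(k, Suc k)"]) auto
  also have "(\<Prod>p\<in>?P'. ?g (?\<phi> p)) = (\<Prod>p\<in>?P'. ?g p)"
    using prod.reindex_bij_betw[OF bij, of ?g] by simp
  also have "?g (?\<phi> (k, Suc k)) = - ?g (k, Suc k)" by (simp add: sw_def)
  also have "- ?g (k, Suc k) * (\<Prod>p\<in>?P'. ?g p) = - (\<Prod>p\<in>?P. ?g p)"
    using mem by (subst (2) prod.remove[of _ "(k, Suc k)"]) (auto simp: algebra_simps)
  finally show ?thesis unfolding DW_pairs .
qed



definition AA :: "complex \<Rightarrow> complex \<Rightarrow> complex \<Rightarrow> complex \<Rightarrow> (nat \<Rightarrow> complex) \<Rightarrow> (nat \<Rightarrow> complex) \<Rightarrow> nat \<Rightarrow> nat \<Rightarrow> complex" where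
  "AA a b e f u w j k = (a * u j + b * w k) * (e * u j + f * w k)"

definition Mm :: "complex \<Rightarrow> complex \<Rightarrow> complex \<Rightarrow> complex \<Rightarrow> nat \<Rightarrow> (nat \<Rightarrow> complex) \<Rightarrow> (nat \<Rightarrow> complex) \<Rightarrow> complex mat" where
  "Mm a b e f n u w = mat n n (\<lambda>(j,k). \<Prod>k'\<in>{1..n}-{Suc k}. AA a b e f u w (Suc j) k')"

definition HH :: "complex \<Rightarrow> complex \<Rightarrow> complex \<Rightarrow> complex \<Rightarrow> complex \<Rightarrow> complex \<Rightarrow> nat \<Rightarrow> (nat \<Rightarrow> complex) \<Rightarrow> (nat \<Rightarrow> complex) \<Rightarrow> complex" where
  "HH t a b c e f n u w = (\<Prod>j=1..n. (1-t)*c*u j) * det (Mm a b e f n u w)"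

lemma HH_u0: "u (Suc n) = 0 \<Longrightarrow> HH t a b c e f (Suc n) u w = 0"
  unfolding HH_def by (simp add: prod.nat_ivl_Suc')

lemma HH_eq_rows:
  assumes j: "1 \<le> j" "j \<le> n" and eq: "u (Suc n) = u j"
  shows "HH t a b c e f (Suc n) u w = 0"
proof -
  have "det (Mm a b e f (Suc n) u w) = 0"
  proof (rule det_identical_rows[of _ "Suc n" "j - 1" n])
    show "Mm a b e f (Suc n) u w \<in> carrier_mat (Suc n) (Suc n)" unfolding Mm_def by simp
    show "j - 1 \<noteq> n" "j - 1 < Suc n" "n < Suc n" using j by auto
    show "row (Mm a b e f (Suc n) u w) (j - 1) = row (Mm a b e f (Suc n) u w) n"
      using j eq by (intro eq_vecI) (auto simp: Mm_def AA_def)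
  qed
  then show ?thesis unfolding HH_def by simp
qed

lemma sw_image:
  assumes "1 \<le> k" "Suc k \<le> n" "m \<in> {1..n}"
  shows "sw k ` ({1..n} - {m}) = {1..n} - {sw k m}"
proof
  show "sw k ` ({1..n} - {m}) \<subseteq> {1..n} - {sw k m}"
    using assms by (auto simp: sw_def split: if_splits)
  show "{1..n} - {sw k m} \<subseteq> sw k ` ({1..n} - {m})"
  proof
    fix x assume x: "x \<in> {1..n} - {sw k m}"
    have "sw k x \<in> {1..n} - {m}" using x assms by (auto simp: sw_def split: if_splits)
    then show "x \<in> sw k ` ({1..n} - {m})" by (intro image_eqI[of _ _ "sw k x"]) auto
  qed
qed

lemma inj_sw: "inj (sw k)"
  by (metis injI sw_sw)

lemma Mm_swap:
  assumes k: "1 \<le> k" "Suc k \<le> n"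
  shows "Mm a b e f n u (w \<circ> sw k) = swapcols (k - 1) k (Mm a b e f n u w)"
proof (rule eq_matI)
  fix i j assume ij: "i < dim_row (swapcols (k - 1) k (Mm a b e f n u w))" "j < dim_col (swapcols (k - 1) k (Mm a b e f n u w))"
  then have i: "i < n" and j: "j < n" unfolding Mm_def by auto
  have "Mm a b e f n u (w \<circ> sw k) $$ (i, j) = (\<Prod>k'\<in>{1..n}-{Suc j}. AA a b e f u w (Suc i) (sw k k'))"
    unfolding Mm_def using i j by (simp add: AA_def)
  also have "\<dots> = (\<Prod>k'\<in>sw k ` ({1..n}-{Suc j}). AA a b e f u w (Suc i) k')"
    by (subst prod.reindex) (auto intro: inj_on_subset[OF inj_sw] simp: o_def)
  also have "\<dots> = (\<Prod>k'\<in>{1..n}-{sw k (Suc j)}. AA a b e f u w (Suc i) k')"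
    using k j by (subst sw_image) auto
  also have "\<dots> = swapcols (k - 1) k (Mm a b e f n u w) $$ (i, j)"
    using i j k unfolding Mm_def by (auto simp: sw_def)
  finally show "Mm a b e f n u (w \<circ> sw k) $$ (i, j) = swapcols (k - 1) k (Mm a b e f n u w) $$ (i, j)" .
qed (auto simp: Mm_def)

lemma HH_swap:
  assumes k: "1 \<le> k" "Suc k \<le> n"
  shows "HH t a b c e f n u (w \<circ> sw k) = - HH t a b c e f n u w"
proof -
  have "det (Mm a b e f n u (w \<circ> sw k)) = - det (Mm a b e f n u w)"
    unfolding Mm_swap[OF k] by (rule det_swapcols[of "k - 1" n k]) (use k in \<open>auto simp: Mm_def\<close>)
  then show ?thesis unfolding HH_def by simp
qed

lemma det_scale_rows:
  "det (mat n n (\<lambda>(i,j). s i * B i j)) = (\<Prod>i<n. s i) * det (mat n n (\<lambda>(i,j). B i j))"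
proof -
  have "det (mat n n (\<lambda>(i,j). s i * B i j)) = (\<Sum>p\<in>{p. p permutes {0..<n}}. signof p * (\<Prod>i=0..<n. s i * B i (p i)))"
    by (subst det_def'[of _ n]) (auto intro!: sum.cong prod.cong simp: permutes_def)
  also have "\<dots> = (\<Sum>p\<in>{p. p permutes {0..<n}}. (\<Prod>i<n. s i) * (signof p * (\<Prod>i=0..<n. B i (p i))))"
    by (simp add: prod.distrib atLeast0LessThan mult_ac)
  also have "\<dots> = (\<Prod>i<n. s i) * det (mat n n (\<lambda>(i,j). B i j))"
    by (subst det_def'[of _ n]) (auto intro!: sum.cong prod.cong simp: permutes_def sum_distrib_left)
  finally show ?thesis .
qed

lemma HH_freeze:
  assumes x: "a * u (Suc n) + b * w (Suc n) = 0"
  shows "HH t a b c e f (Suc n) u w = HH t a b c e f n u w * ((1-t)*c*u (Suc n)) *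
     (\<Prod>k=1..n. AA a b e f u w (Suc n) k) * (\<Prod>j=1..n. AA a b e f u w j (Suc n))"
proof -
  let ?M = "Mm a b e f (Suc n) u w"
  have M: "?M \<in> carrier_mat (Suc n) (Suc n)" unfolding Mm_def by simp
  have A0: "AA a b e f u w (Suc n) (Suc n) = 0" using x by (simp add: AA_def)
  have row0: "?M $$ (n, jj) = 0" if "jj < n" for jj
  proof -
    have "Suc n \<in> {1..Suc n} - {Suc jj}" using that by auto
    then show ?thesis unfolding Mm_def using that A0
      by (auto intro: prod_zero)
  qed
  have "det ?M = (\<Sum>jj<Suc n. ?M $$ (n, jj) * cofactor ?M n jj)"
    by (rule laplace_expansion_row[OF M]) simp
  also have "\<dots> = ?M $$ (n, n) * cofactor ?M n n"
    using row0 by (simp add: lessThan_Suc)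
  also have "?M $$ (n, n) = (\<Prod>k=1..n. AA a b e f u w (Suc n) k)"
  proof -
    have "{1..Suc n} - {Suc n} = {1..n}" by auto
    then show ?thesis unfolding Mm_def by simp
  qed
  also have "cofactor ?M n n = det (mat n n (\<lambda>(i,j). AA a b e f u w (Suc i) (Suc n) * (\<Prod>k'\<in>{1..n}-{Suc j}. AA a b e f u w (Suc i) k')))"
  proof -
    have "mat_delete ?M n n = mat n n (\<lambda>(i,j). AA a b e f u w (Suc i) (Suc n) * (\<Prod>k'\<in>{1..n}-{Suc j}. AA a b e f u w (Suc i) k'))"
    proof (rule eq_matI)
      fix i j assume "i < dim_row (mat n n (\<lambda>(i,j). AA a b e f u w (Suc i) (Suc n) * (\<Prod>k'\<in>{1..n}-{Suc j}. AA a b e f u w (Suc i) k')))"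
        "j < dim_col (mat n n (\<lambda>(i,j). AA a b e f u w (Suc i) (Suc n) * (\<Prod>k'\<in>{1..n}-{Suc j}. AA a b e f u w (Suc i) k')))"
      then have ij: "i < n" "j < n" by auto
      have "{1..Suc n} - {Suc j} = insert (Suc n) ({1..n} - {Suc j})" using ij by auto
      then show "mat_delete ?M n n $$ (i, j) = mat n n (\<lambda>(i,j). AA a b e f u w (Suc i) (Suc n) * (\<Prod>k'\<in>{1..n}-{Suc j}. AA a b e f u w (Suc i) k')) $$ (i, j)"
        using ij unfolding mat_delete_def Mm_def by simp
    qed (auto simp: mat_delete_def Mm_def)
    then show ?thesis unfolding cofactor_def by simp
  qed
  also have "\<dots> = (\<Prod>i<n. AA a b e f u w (Suc i) (Suc n)) * det (Mm a b e f n u w)"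
    unfolding Mm_def by (subst det_scale_rows) (simp add: case_prod_unfold)
  also have "(\<Prod>i<n. AA a b e f u w (Suc i) (Suc n)) = (\<Prod>j=1..n. AA a b e f u w j (Suc n))"
  proof -
    have "(\<Prod>j=1..n. AA a b e f u w j (Suc n)) = (\<Prod>j\<in>{Suc 0..<Suc n}. AA a b e f u w j (Suc n))"
      by (simp add: atLeastLessThanSuc_atLeastAtMost)
    also have "\<dots> = (\<Prod>i\<in>{0..<n}. AA a b e f u w (Suc i) (Suc n))"
      by (rule prod.shift_bounds_Suc_ivl)
    finally show ?thesis by (simp add: atLeast0LessThan)
  qed
  finally have "det ?M = (\<Prod>k=1..n. AA a b e f u w (Suc n) k) * ((\<Prod>j=1..n. AA a b e f u w j (Suc n)) * det (Mm a b e f n u w))" .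
  then show ?thesis unfolding HH_def by (simp add: prod.nat_ivl_Suc' mult_ac)
qed



definition GG :: "complex \<Rightarrow> complex \<Rightarrow> complex \<Rightarrow> complex \<Rightarrow> complex \<Rightarrow> complex \<Rightarrow> complex \<Rightarrow> nat \<Rightarrow> (nat \<Rightarrow> complex) \<Rightarrow> (nat \<Rightarrow> complex) \<Rightarrow> complex" where
  "GG t a b c d e f n u w = Zpf t a b c d e f n u w * (c*d)^(n*(n-1) div 2) * DU n u * DW n w"

lemma GG_u0: "u (Suc n) = 0 \<Longrightarrow> GG t a b c d e f (Suc n) u w = 0"
  unfolding GG_def by (simp add: Zpf_u0)

lemma GG_eq_rows:
  assumes j: "1 \<le> j" "j \<le> n" and eq: "u (Suc n) = u j"
  shows "GG t a b c d e f (Suc n) u w = 0"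
proof -
  have "(\<Prod>j=1..n. (u j - u (Suc n))) = 0" using j eq by (intro prod_zero) (auto intro!: bexI[of _ j])
  then show ?thesis unfolding GG_def DU_Suc by simp
qed

lemma GG_swap:
  assumes ab: "a \<noteq> 0" "b \<noteq> 0" "c \<noteq> 0" "d \<noteq> 0" "c*d + a*f = 0" "t*c*d + b*e = 0"
    and k: "1 \<le> k" "Suc k \<le> n"
  shows "GG t a b c d e f n u (w \<circ> sw k) = - GG t a b c d e f n u w"
proof -
  have "Zpf t a b c d e f n u (w \<circ> sw k) = Zpf t a b c d e f n u w"
    using Zpf_swap[OF ab k, of u w] unfolding upd_sw by simp
  then show ?thesis unfolding GG_def DW_swap[OF k] by simp
qed

lemma exp_Suc: "Suc n * (Suc n - 1) div 2 = n * (n - 1) div 2 + n"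
proof -
  have "Suc n * n = n * (n - 1) + n * 2" by (cases n) (simp_all add: algebra_simps)
  then show ?thesis by simp
qed

lemma GG_freeze:
  assumes x: "a * u (Suc n) + b * w (Suc n) = 0"
  shows "GG t a b c d e f (Suc n) u w = GG t a b c d e f n u w *
     ((1-t)*c*u (Suc n) * (\<Prod>i=1..n. e*u (Suc n) + f*w i) * (\<Prod>j=1..n. a*t*u j + b*w (Suc n))
      * (c*d)^n * (\<Prod>j=1..n. (u j - u (Suc n))) * (\<Prod>j=1..n. (w (Suc n) - w j)))"
  unfolding GG_def DU_Suc DW_Suc Zpf_freeze[where u=u and w=w and n=n, OF x] exp_Suc by (simp add: power_add mult_ac)

lemma factor_id:
  fixes a b c d e f t x wN wi ui :: complex
  assumes ab: "a \<noteq> 0" "b \<noteq> 0" "c*d + a*f = 0" "t*c*d + b*e = 0"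
    and x: "a * x + b * wN = 0"
  shows "(e*x + f*wi) * (a*t*ui + b*wN) * (c*d) * (ui - x) * (wN - wi) =
         ((a*x + b*wi)*(e*x + f*wi)) * ((a*ui + b*wN)*(e*ui + f*wN))"
proof -
  have e: "e = -t*c*d/b"
  proof -
    have "b*e = -(t*c*d)" using ab(4) by (simp add: eq_neg_iff_add_eq_0 add.commute)
    then show ?thesis using ab(2) by (simp add: field_simps)
  qed
  have f: "f = -c*d/a"
  proof -
    have "a*f = -(c*d)" using ab(3) by (simp add: eq_neg_iff_add_eq_0 add.commute)
    then show ?thesis using ab(1) by (simp add: field_simps)
  qed
  have w: "wN = -a*x/b"
  proof -
    have "b*wN = -(a*x)" using x by (simp add: eq_neg_iff_add_eq_0 add.commute)
    then show ?thesis using ab(2) by (simp add: field_simps)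
  qed
  show ?thesis unfolding e f w using ab(1,2) by (simp add: field_simps)
qed

lemma freeze_combined:
  assumes ab: "a \<noteq> 0" "b \<noteq> 0" "c*d + a*f = 0" "t*c*d + b*e = 0"
    and x: "a * u (Suc n) + b * w (Suc n) = 0"
  shows "(\<Prod>i=1..n. e*u (Suc n) + f*w i) * (\<Prod>j=1..n. a*t*u j + b*w (Suc n))
      * (c*d)^n * (\<Prod>j=1..n. (u j - u (Suc n))) * (\<Prod>j=1..n. (w (Suc n) - w j))
    = (\<Prod>k=1..n. AA a b e f u w (Suc n) k) * (\<Prod>j=1..n. AA a b e f u w j (Suc n))"
proof -
  have "(\<Prod>i=1..n. e*u (Suc n) + f*w i) * (\<Prod>j=1..n. a*t*u j + b*w (Suc n))
      * (c*d)^n * (\<Prod>j=1..n. (u j - u (Suc n))) * (\<Prod>j=1..n. (w (Suc n) - w j))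
     = (\<Prod>i=1..n. (e*u (Suc n) + f*w i) * (a*t*u i + b*w (Suc n)) * (c*d) * (u i - u (Suc n)) * (w (Suc n) - w i))"
    by (simp add: prod.distrib)
  also have "\<dots> = (\<Prod>i=1..n. AA a b e f u w (Suc n) i * AA a b e f u w i (Suc n))"
    unfolding AA_def by (intro prod.cong refl factor_id[OF ab x])
  also have "\<dots> = (\<Prod>k=1..n. AA a b e f u w (Suc n) k) * (\<Prod>j=1..n. AA a b e f u w j (Suc n))"
    by (simp add: prod.distrib)
  finally show ?thesis .
qed



lemma pf_AA: "pf 2 (\<lambda>x. AA a b e f (u(j := x)) w j k)"
proof -
  have "pf (1+1) (\<lambda>x. (a * x + b * w k) * (e * x + f * w k))"
    by (intro pf_mult) (use pf_affine[of "b * w k" a] pf_affine[of "f * w k" e] in \<open>simp_all add: add.commute\<close>)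
  then show ?thesis unfolding AA_def by (simp add: numeral_2_eq_2)
qed

lemma DU_upd: "DU n (u(Suc n := x)) = DU n u"
  unfolding DU_def by (intro prod.cong refl) auto

lemma pf_GG: "pf (2*n+1) (\<lambda>x. GG t a b c d e f (Suc n) (u(Suc n := x)) w)"
proof -
  have eq: "GG t a b c d e f (Suc n) (u(Suc n := x)) w = Zpf t a b c d e f (Suc n) (u(Suc n := x)) w * (c*d)^(Suc n*(Suc n-1) div 2)
     * (DU n u * (\<Prod>j=1..n. (u j - x))) * DW (Suc n) w" for x
  proof -
    have "(\<Prod>j=1..n. ((u(Suc n := x)) j - (u(Suc n := x)) (Suc n))) = (\<Prod>j=1..n. (u j - x))"
      by (intro prod.cong refl) auto
    then show ?thesis unfolding GG_def DU_Suc DU_upd by simp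
  qed
  have p1: "pf n (\<lambda>x. \<Prod>j=1..n. (u j - x))"
  proof -
    have "pf (\<Sum>j\<in>{1..n}. 1) (\<lambda>x. \<Prod>j=1..n. (u j - x))"
      by (intro pf_prod) (use pf_affine[of "u _" "-1"] in auto)
    then show ?thesis by simp
  qed
  have "pf (((Suc n + 0) + (0 + n)) + 0) (\<lambda>x. Zpf t a b c d e f (Suc n) (u(Suc n := x)) w * (c*d)^(Suc n*(Suc n-1) div 2)
     * (DU n u * (\<Prod>j=1..n. (u j - x))) * DW (Suc n) w)"
    by (intro pf_mult pf_Zpf pf_const p1)
  then show ?thesis unfolding eq by (rule pf_mono) simp
qed

lemma pf_HH: "pf (2*n+1) (\<lambda>x. HH t a b c e f (Suc n) (u(Suc n := x)) w)"
proof -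
  let ?N = "Suc n"
  define deg where "deg i = (if i = n then 2*n else 0)" for i :: nat
  have entry: "pf (deg i) (\<lambda>x. \<Prod>k'\<in>{1..?N}-{Suc (p i)}. AA a b e f (u(?N := x)) w (Suc i) k')"
    if p: "p permutes {0..<?N}" and i: "i \<in> {0..<?N}" for p i
  proof (cases "i = n")
    case True
    have pi: "p i < ?N" using p i by (simp add: permutes_in_image)
    have card: "card ({1..?N}-{Suc (p i)}) = n" using pi by simp
    have "pf (\<Sum>k'\<in>{1..?N}-{Suc (p i)}. 2) (\<lambda>x. \<Prod>k'\<in>{1..?N}-{Suc (p i)}. AA a b e f (u(?N := x)) w ?N k')"
      by (intro pf_prod pf_AA) auto
    then show ?thesis using True card by (simp add: deg_def mult.commute)
  next
    case False
    then have "Suc i \<noteq> ?N" by simp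
    then have "AA a b e f (u(?N := x)) w (Suc i) k' = AA a b e f u w (Suc i) k'" for x k'
      by (simp add: AA_def)
    then show ?thesis using False by (simp add: deg_def)
  qed
  have detpf: "pf (2*n) (\<lambda>x. det (Mm a b e f ?N (u(?N := x)) w))"
  proof -
    have deteq: "det (Mm a b e f ?N (u(?N := x)) w) = (\<Sum>p\<in>{p. p permutes {0..<?N}}. signof p *
        (\<Prod>i=0..<?N. \<Prod>k'\<in>{1..?N}-{Suc (p i)}. AA a b e f (u(?N := x)) w (Suc i) k'))" for x
      unfolding Mm_def
      by (subst det_def'[of _ ?N]) (auto intro!: sum.cong prod.cong simp: permutes_in_image)
    have "pf (0 + (\<Sum>i=0..<?N. deg i)) (\<lambda>x. \<Sum>p\<in>{p. p permutes {0..<?N}}. signof p *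
        (\<Prod>i=0..<?N. \<Prod>k'\<in>{1..?N}-{Suc (p i)}. AA a b e f (u(?N := x)) w (Suc i) k'))"
      by (intro pf_sum pf_mult pf_const pf_prod entry) (auto simp: finite_permutations)
    moreover have "(\<Sum>i=0..<?N. deg i) = 2*n" unfolding deg_def by simp
    ultimately show ?thesis unfolding deteq by simp
  qed
  have eq: "HH t a b c e f ?N (u(?N := x)) w = (\<Prod>j=1..n. (1-t)*c*u j) * ((1-t)*c*x) * det (Mm a b e f ?N (u(?N := x)) w)" for x
  proof -
    have "(\<Prod>j=1..n. (1-t)*c*(u(?N := x)) j) = (\<Prod>j=1..n. (1-t)*c*u j)" by (intro prod.cong refl) auto
    then show ?thesis unfolding HH_def by (simp add: prod.nat_ivl_Suc')
  qed
  have "pf ((0 + 1) + 2*n) (\<lambda>x. (\<Prod>j=1..n. (1-t)*c*u j) * ((1-t)*c*x) * det (Mm a b e f ?N (u(?N := x)) w))"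
    by (intro pf_mult pf_const detpf) (use pf_affine[of 0 "(1-t)*c"] in simp)
  then show ?thesis unfolding eq by simp
qed

lemma ispoly_AA: "(\<And>j. ispoly (\<lambda>s. U s j)) \<Longrightarrow> (\<And>k. ispoly (\<lambda>s. W s k)) \<Longrightarrow> ispoly (\<lambda>s. AA a b e f (U s) (W s) j k)"
  unfolding AA_def by (intro ispoly_mult ispoly_add ispoly_const) auto

lemma ispoly_GG:
  assumes "\<And>j. ispoly (\<lambda>s. U s j)" "\<And>k. ispoly (\<lambda>s. W s k)"
  shows "ispoly (\<lambda>s. GG t a b c d e f N (U s) (W s))"
  unfolding GG_def DU_def DW_def
  by (intro ispoly_mult ispoly_Zpf ispoly_const ispoly_prod ispoly_diff assms finite_atLeastAtMost finite_greaterThanAtMost)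

lemma ispoly_HH:
  assumes "\<And>j. ispoly (\<lambda>s. U s j)" "\<And>k. ispoly (\<lambda>s. W s k)"
  shows "ispoly (\<lambda>s. HH t a b c e f N (U s) (W s))"
proof -
  have deteq: "det (Mm a b e f N (U s) (W s)) = (\<Sum>p\<in>{p. p permutes {0..<N}}. signof p *
        (\<Prod>i=0..<N. \<Prod>k'\<in>{1..N}-{Suc (p i)}. AA a b e f (U s) (W s) (Suc i) k'))" for s
    unfolding Mm_def
    by (subst det_def'[of _ N]) (auto intro!: sum.cong prod.cong simp: permutes_in_image)
  show ?thesis unfolding HH_def deteq
    by (intro ispoly_mult ispoly_sum ispoly_prod ispoly_const ispoly_AA assms) (auto simp: finite_permutations)
qed



lemma claim_base: "GG t a b c d e f 0 u w = HH t a b c e f 0 u w"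
  unfolding GG_def HH_def DU_def DW_def Zpf_def Mm_def
  by (simp add: det_def Omega_def)

lemma freeze_claim:
  assumes IH: "\<And>u w. GG t a b c d e f n u w = HH t a b c e f n u w"
    and ab: "a \<noteq> 0" "b \<noteq> 0" "c*d + a*f = 0" "t*c*d + b*e = 0"
    and x: "a * u (Suc n) + b * w (Suc n) = 0"
  shows "GG t a b c d e f (Suc n) u w = HH t a b c e f (Suc n) u w"
proof -
  let ?c1 = "(1-t)*c*u (Suc n)"
  let ?P = "(\<Prod>i=1..n. e*u (Suc n) + f*w i) * (\<Prod>j=1..n. a*t*u j + b*w (Suc n))
      * (c*d)^n * (\<Prod>j=1..n. (u j - u (Suc n))) * (\<Prod>j=1..n. (w (Suc n) - w j))"
  let ?A = "(\<Prod>k=1..n. AA a b e f u w (Suc n) k) * (\<Prod>j=1..n. AA a b e f u w j (Suc n))"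
  have "GG t a b c d e f (Suc n) u w = GG t a b c d e f n u w * ?c1 * ?P"
    unfolding GG_freeze[where u=u and w=w and n=n, OF x] by (simp add: mult_ac)
  also have "\<dots> = GG t a b c d e f n u w * ?c1 * ?A"
    by (simp only: freeze_combined[where u=u and w=w and n=n and t=t, OF ab x])
  also have "\<dots> = HH t a b c e f n u w * ?c1 * ?A" by (simp only: IH)
  also have "\<dots> = HH t a b c e f (Suc n) u w"
    unfolding HH_freeze[where u=u and w=w and n=n, OF x] by (simp add: mult_ac)
  finally show ?thesis .
qed

lemma zero_at_k:
  assumes ab: "a \<noteq> 0" "b \<noteq> 0" "c \<noteq> 0" "d \<noteq> 0" "c*d + a*f = 0" "t*c*d + b*e = 0"
    and F: "\<And>w. a * U N + b * w N = 0 \<Longrightarrow> GG t a b c d e f N U w = HH t a b c e f N U w"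
    and k: "1 \<le> k" "k \<le> N"
  shows "a * U N + b * w k = 0 \<Longrightarrow> GG t a b c d e f N U w = HH t a b c e f N U w"
proof -
  have "\<forall>w. a * U N + b * w k = 0 \<longrightarrow> GG t a b c d e f N U w = HH t a b c e f N U w"
    using k(2)
  proof (induction k rule: inc_induct)
    case base then show ?case using F by auto
  next
    case (step m)
    show ?case
    proof (intro allI impI)
      fix w assume h: "a * U N + b * w m = 0"
      have m: "1 \<le> m" "Suc m \<le> N" using k step.hyps by auto
      have "a * U N + b * (w \<circ> sw m) (Suc m) = 0" using h by (simp add: sw_def)
      then have "GG t a b c d e f N U (w \<circ> sw m) = HH t a b c e f N U (w \<circ> sw m)"
        using step.IH by blast
      then show "GG t a b c d e f N U w = HH t a b c e f N U w"
        using GG_swap[OF ab m, of U w] HH_swap[OF m, of t a b c e f U w] by simp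
    qed
  qed
  then show "a * U N + b * w k = 0 \<Longrightarrow> GG t a b c d e f N U w = HH t a b c e f N U w" by auto
qed



lemma stepA:
  assumes IH: "\<And>u w. GG t a b c d e f n u w = HH t a b c e f n u w"
    and ab: "a \<noteq> 0" "b \<noteq> 0" "c \<noteq> 0" "d \<noteq> 0" "c*d + a*f = 0" "t*c*d + b*e = 0"
    and gu: "\<And>i j. i \<in> {1..n} \<Longrightarrow> j \<in> {1..n} \<Longrightarrow> i \<noteq> j \<Longrightarrow> u i \<noteq> u j"
    and gu0: "\<And>j. j \<in> {1..n} \<Longrightarrow> u j \<noteq> 0"
    and gw: "\<And>i j. i \<in> {1..Suc n} \<Longrightarrow> j \<in> {1..Suc n} \<Longrightarrow> i \<noteq> j \<Longrightarrow> w i \<noteq> w j"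
    and gw0: "\<And>k. k \<in> {1..Suc n} \<Longrightarrow> w k \<noteq> 0"
    and guw: "\<And>j k. j \<in> {1..n} \<Longrightarrow> k \<in> {1..Suc n} \<Longrightarrow> a * u j + b * w k \<noteq> 0"
  shows "GG t a b c d e f (Suc n) u w = HH t a b c e f (Suc n) u w"
proof -
  let ?N = "Suc n"
  define P where "P x = GG t a b c d e f ?N (u(?N := x)) w - HH t a b c e f ?N (u(?N := x)) w" for x
  have pP: "pf (2*n+1) P" unfolding P_def by (intro pf_diff pf_GG pf_HH)
  let ?g = "\<lambda>k. - b * w k / a"
  let ?A = "u ` {1..n}"
  let ?B = "?g ` {1..?N}"
  define S where "S = ?A \<union> {0} \<union> ?B"
  have finS: "finite S" unfolding S_def by simp
  have "inj_on u {1..n}"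
  proof (rule inj_onI)
    fix x y assume "x \<in> {1..n}" "y \<in> {1..n}" "u x = u y" then show "x = y" using gu by blast
  qed
  then have cardA: "card ?A = n" by (simp add: card_image)
  have "inj_on ?g {1..?N}"
  proof (rule inj_onI)
    fix x y assume h: "x \<in> {1..?N}" "y \<in> {1..?N}" "?g x = ?g y"
    then have "w x = w y" using ab by (simp add: field_simps)
    then show "x = y" using gw h by blast
  qed
  then have cardB: "card ?B = ?N" by (simp add: card_image)
  have d1: "?A \<inter> {0} = {}" using gu0 by auto
  have d2: "(?A \<union> {0}) \<inter> ?B = {}"
  proof -
    have "u j \<noteq> - b * w k / a" if "j \<in> {1..n}" "k \<in> {1..?N}" for j k
      using guw[OF that] ab by (auto simp: field_simps)
    moreover have "0 \<noteq> - b * w k / a" if "k \<in> {1..?N}" for k using gw0[OF that] ab by auto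
    ultimately show ?thesis by auto
  qed
  have c1: "card (?A \<union> {0}) = n + 1" using card_Un_disjoint[of ?A "{0}"] d1 cardA by simp
  have "card S = card (?A \<union> {0}) + card ?B" unfolding S_def by (rule card_Un_disjoint) (use d2 in auto)
  then have cardS: "card S = 2*n+2" using c1 cardB by simp
  have zeros: "P x = 0" if "x \<in> S" for x
  proof -
    have "x \<in> ?A \<or> x = 0 \<or> x \<in> ?B" using that unfolding S_def by blast
    then consider (A) j where "j \<in> {1..n}" "x = u j" | (Z) "x = 0" | (B) k where "k \<in> {1..?N}" "x = ?g k"
      by (elim disjE imageE) blast+
    then show ?thesis
    proof cases
      case A
      have eq: "(u(?N := x)) ?N = (u(?N := x)) j" using A by auto
      have "GG t a b c d e f ?N (u(?N := x)) w = 0" by (rule GG_eq_rows[OF _ _ eq]) (use A in auto)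
      moreover have "HH t a b c e f ?N (u(?N := x)) w = 0" by (rule HH_eq_rows[OF _ _ eq]) (use A in auto)
      ultimately show ?thesis unfolding P_def by simp
    next
      case Z
      then show ?thesis unfolding P_def by (simp add: GG_u0 HH_u0)
    next
      case B
      have F: "GG t a b c d e f ?N (u(?N := x)) w' = HH t a b c e f ?N (u(?N := x)) w'"
        if "a * (u(?N := x)) ?N + b * w' ?N = 0" for w'
        using freeze_claim[where t=t and a=a and b=b and c=c and d=d and e=e and f=f and n=n and u="u(?N := x)" and w=w', OF IH ab(1,2,5,6) that] .
      have "a * (u(?N := x)) ?N + b * w k = 0" using B ab by (simp add: field_simps)
      moreover have kk: "1 \<le> k" "k \<le> ?N" using B by auto
      ultimately have "GG t a b c d e f ?N (u(?N := x)) w = HH t a b c e f ?N (u(?N := x)) w"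
        using zero_at_k[where U="u(?N := x)" and N="?N" and k=k and w=w, OF ab F kk] by blast
      then show ?thesis unfolding P_def by simp
    qed
  qed
  have "P (u ?N) = 0" by (rule pf_zero[OF pP finS]) (use cardS zeros in auto)
  then show ?thesis unfolding P_def by simp
qed

lemma finite_lin: "\<beta> \<noteq> 0 \<Longrightarrow> finite {s::complex. \<alpha> + s * \<beta> = 0}"
proof -
  assume "\<beta> \<noteq> 0"
  have "s = - \<alpha> / \<beta>" if "\<alpha> + s * \<beta> = 0" for s
  proof -
    from that have "s * \<beta> = - \<alpha>" by (simp add: eq_neg_iff_add_eq_0 add.commute)
    then show ?thesis using \<open>\<beta> \<noteq> 0\<close> by (simp add: field_simps)
  qed
  then have "{s::complex. \<alpha> + s * \<beta> = 0} \<subseteq> {- \<alpha> / \<beta>}" by auto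
  then show ?thesis by (rule finite_subset) simp
qed

lemma stepB:
  assumes IH: "\<And>u w. GG t a b c d e f n u w = HH t a b c e f n u w"
    and ab: "a \<noteq> 0" "b \<noteq> 0" "c \<noteq> 0" "d \<noteq> 0" "c*d + a*f = 0" "t*c*d + b*e = 0"
  shows "GG t a b c d e f (Suc n) u w = HH t a b c e f (Suc n) u w"
proof -
  let ?N = "Suc n"
  define Bad where "Bad = insert 0 ((\<lambda>(j,k). - a * of_nat j / (b * of_nat k)) ` ({1..n} \<times> {1..?N}))"
  have "finite Bad" unfolding Bad_def by simp
  then obtain R :: complex where R: "R \<notin> Bad" using ex_new_if_finite[OF infinite_UNIV_char_0] by blast
  have R0: "R \<noteq> 0" using R unfolding Bad_def by auto
  have Rjk: "a * of_nat j + b * R * of_nat k \<noteq> 0" if "j \<in> {1..n}" "k \<in> {1..?N}" for j k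
  proof
    assume h: "a * of_nat j + b * R * of_nat k = 0"
    have k0: "(of_nat k :: complex) \<noteq> 0" using that by auto
    have "b * of_nat k * R = - (a * of_nat j)" using h by (simp add: eq_neg_iff_add_eq_0 add.commute mult_ac)
    then have "R = - a * of_nat j / (b * of_nat k)" using ab k0 by (simp add: field_simps)
    then have "R \<in> Bad" unfolding Bad_def using that by (auto intro!: image_eqI[of _ _ "(j,k)"])
    then show False using R by simp
  qed
  define U where "U s j = u j + of_nat j * s" for s :: complex and j
  define W where "W s k = w k + (R * of_nat k) * s" for s :: complex and k
  define Q where "Q s = GG t a b c d e f ?N (U s) (W s) - HH t a b c e f ?N (U s) (W s)" for s
  have pU: "ispoly (\<lambda>s. U s j)" for j unfolding U_def by (rule ispoly_affine)
  have pW: "ispoly (\<lambda>s. W s k)" for k unfolding W_def by (rule ispoly_affine)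
  have pQ: "ispoly Q" unfolding Q_def by (intro ispoly_diff ispoly_GG ispoly_HH pU pW)
  define B1 where "B1 = (\<Union>i\<in>{1..n}. \<Union>j\<in>{1..n}-{i}. {s. (u i - u j) + s * (of_nat i - of_nat j) = 0})"
  define B2 where "B2 = (\<Union>j\<in>{1..n}. {s. u j + s * of_nat j = 0})"
  define B3 where "B3 = (\<Union>i\<in>{1..?N}. \<Union>j\<in>{1..?N}-{i}. {s. (w i - w j) + s * (R * (of_nat i - of_nat j)) = 0})"
  define B4 where "B4 = (\<Union>k\<in>{1..?N}. {s. w k + s * (R * of_nat k) = 0})"
  define B5 where "B5 = (\<Union>j\<in>{1..n}. \<Union>k\<in>{1..?N}. {s. (a * u j + b * w k) + s * (a * of_nat j + b * R * of_nat k) = 0})"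
  define BS where "BS = B1 \<union> B2 \<union> B3 \<union> B4 \<union> B5"
  have finBS: "finite BS"
  proof -
    have "finite B1" unfolding B1_def by (intro finite_UN_I finite_lin) auto
    moreover have "finite B2" unfolding B2_def by (intro finite_UN_I finite_lin) auto
    moreover have "finite B3" unfolding B3_def using R0 by (intro finite_UN_I finite_lin) auto
    moreover have "finite B4" unfolding B4_def using R0 by (intro finite_UN_I finite_lin) auto
    moreover have "finite B5" unfolding B5_def using Rjk by (intro finite_UN_I finite_lin) auto
    ultimately show ?thesis unfolding BS_def by simp
  qed
  have good: "Q s = 0" if s: "s \<notin> BS" for s
  proof -
    have "GG t a b c d e f ?N (U s) (W s) = HH t a b c e f ?N (U s) (W s)"
    proof (rule stepA[OF IH ab])
      show "U s i \<noteq> U s j" if "i \<in> {1..n}" "j \<in> {1..n}" "i \<noteq> j" for i j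
      proof
        assume "U s i = U s j"
        then have "(u i - u j) + s * (of_nat i - of_nat j) = 0" unfolding U_def by (simp add: algebra_simps)
        then have "s \<in> B1" unfolding B1_def using that by blast
        then have "s \<in> BS" unfolding BS_def by simp
        then show False using s by simp
      qed
      show "U s j \<noteq> 0" if "j \<in> {1..n}" for j
      proof
        assume "U s j = 0"
        then have "u j + s * of_nat j = 0" unfolding U_def by (simp add: algebra_simps)
        then have "s \<in> B2" unfolding B2_def using that by blast
        then have "s \<in> BS" unfolding BS_def by simp
        then show False using s by simp
      qed
      show "W s i \<noteq> W s j" if "i \<in> {1..?N}" "j \<in> {1..?N}" "i \<noteq> j" for i j
      proof
        assume "W s i = W s j"
        then have "(w i - w j) + s * (R * (of_nat i - of_nat j)) = 0" unfolding W_def by (simp add: algebra_simps)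
        then have "s \<in> B3" unfolding B3_def using that by blast
        then have "s \<in> BS" unfolding BS_def by simp
        then show False using s by simp
      qed
      show "W s k \<noteq> 0" if "k \<in> {1..?N}" for k
      proof
        assume "W s k = 0"
        then have "w k + s * (R * of_nat k) = 0" unfolding W_def by (simp add: algebra_simps)
        then have "s \<in> B4" unfolding B4_def using that by blast
        then have "s \<in> BS" unfolding BS_def by simp
        then show False using s by simp
      qed
      show "a * U s j + b * W s k \<noteq> 0" if "j \<in> {1..n}" "k \<in> {1..?N}" for j k
      proof
        assume "a * U s j + b * W s k = 0"
        then have "(a * u j + b * w k) + s * (a * of_nat j + b * R * of_nat k) = 0" unfolding U_def W_def by (simp add: algebra_simps)
        then have "s \<in> B5" unfolding B5_def using that by blast
        then have "s \<in> BS" unfolding BS_def by simp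
        then show False using s by simp
      qed
    qed
    then show ?thesis unfolding Q_def by simp
  qed
  have "infinite (UNIV - BS)" using finBS by (simp add: infinite_UNIV_char_0 Diff_infinite_finite)
  then have "infinite {s. Q s = 0}" by (rule infinite_super[rotated]) (auto intro: good)
  then have "Q 0 = 0" by (rule ispoly_zero[OF pQ])
  moreover have "U 0 = u" "W 0 = w" unfolding U_def W_def by auto
  ultimately show ?thesis unfolding Q_def by simp
qed

lemma claim_all:
  assumes ab: "a \<noteq> 0" "b \<noteq> 0" "c \<noteq> 0" "d \<noteq> 0" "c*d + a*f = 0" "t*c*d + b*e = 0"
  shows "GG t a b c d e f n u w = HH t a b c e f n u w"
proof (induction n arbitrary: u w)
  case 0 then show ?case by (rule claim_base)
next
  case (Suc n) then show ?case using stepB[OF _ ab] by blast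
qed



lemma prod_shift1: "(\<Prod>j=1..N. g j) = (\<Prod>i=0..<N. g (Suc i))"
proof -
  have "(\<Prod>j=1..N. g j) = (\<Prod>j\<in>{Suc 0..<Suc N}. g j)" by (simp add: atLeastLessThanSuc_atLeastAtMost)
  also have "\<dots> = (\<Prod>i\<in>{0..<N}. g (Suc i))" by (rule prod.shift_bounds_Suc_ivl)
  finally show ?thesis .
qed

lemma key_det:
  assumes nz: "\<And>j k. j \<in> {1..N} \<Longrightarrow> k \<in> {1..N} \<Longrightarrow> AA a b e f u w j k \<noteq> 0"
  shows "(\<Prod>j=1..N. \<Prod>k=1..N. AA a b e f u w j k) * det (mat N N (\<lambda>(j,k). 1 / AA a b e f u w (Suc j) (Suc k)))
     = det (Mm a b e f N u w)"
proof -
  let ?A = "AA a b e f u w"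
  have d1: "det (mat N N (\<lambda>(j,k). 1 / ?A (Suc j) (Suc k))) = (\<Sum>p\<in>{p. p permutes {0..<N}}. signof p * (\<Prod>i=0..<N. 1 / ?A (Suc i) (Suc (p i))))"
    by (subst det_def'[of _ N]) (auto intro!: sum.cong prod.cong simp: permutes_in_image)
  have d2: "det (Mm a b e f N u w) = (\<Sum>p\<in>{p. p permutes {0..<N}}. signof p * (\<Prod>i=0..<N. \<Prod>k\<in>{1..N}-{Suc (p i)}. ?A (Suc i) k))"
    unfolding Mm_def by (subst det_def'[of _ N]) (auto intro!: sum.cong prod.cong simp: permutes_in_image)
  have row: "(\<Prod>k=1..N. ?A (Suc i) k) * (1 / ?A (Suc i) (Suc (p i))) = (\<Prod>k\<in>{1..N}-{Suc (p i)}. ?A (Suc i) k)"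
    if p: "p permutes {0..<N}" and i: "i < N" for p i
  proof -
    have "p i \<in> {0..<N}" using p i by (simp add: permutes_in_image)
    then have pi: "Suc (p i) \<in> {1..N}" by auto
    have nz1: "?A (Suc i) (Suc (p i)) \<noteq> 0" using nz pi i by auto
    have "(\<Prod>k=1..N. ?A (Suc i) k) = ?A (Suc i) (Suc (p i)) * (\<Prod>k\<in>{1..N}-{Suc (p i)}. ?A (Suc i) k)"
      using pi by (subst prod.remove[of _ "Suc (p i)"]) auto
    then show ?thesis using nz1 by simp
  qed
  have "(\<Prod>j=1..N. \<Prod>k=1..N. ?A j k) * det (mat N N (\<lambda>(j,k). 1 / ?A (Suc j) (Suc k)))
     = (\<Sum>p\<in>{p. p permutes {0..<N}}. signof p * ((\<Prod>i=0..<N. \<Prod>k=1..N. ?A (Suc i) k) * (\<Prod>i=0..<N. 1 / ?A (Suc i) (Suc (p i)))))"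
    unfolding d1 prod_shift1[of "\<lambda>j. \<Prod>k=1..N. ?A j k"] by (simp add: sum_distrib_left mult_ac)
  also have "\<dots> = (\<Sum>p\<in>{p. p permutes {0..<N}}. signof p * (\<Prod>i=0..<N. \<Prod>k\<in>{1..N}-{Suc (p i)}. ?A (Suc i) k))"
  proof (rule sum.cong[OF refl])
    fix p assume "p \<in> {p. p permutes {0..<N}}"
    then have p: "p permutes {0..<N}" by simp
    have "(\<Prod>i=0..<N. \<Prod>k=1..N. ?A (Suc i) k) * (\<Prod>i=0..<N. 1 / ?A (Suc i) (Suc (p i)))
        = (\<Prod>i=0..<N. (\<Prod>k=1..N. ?A (Suc i) k) * (1 / ?A (Suc i) (Suc (p i))))"
      by (rule prod.distrib[symmetric])
    also have "\<dots> = (\<Prod>i=0..<N. \<Prod>k\<in>{1..N}-{Suc (p i)}. ?A (Suc i) k)"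
      by (intro prod.cong refl row[OF p]) auto
    finally show "signof p * ((\<Prod>i=0..<N. \<Prod>k=1..N. ?A (Suc i) k) * (\<Prod>i=0..<N. 1 / ?A (Suc i) (Suc (p i)))) =
       signof p * (\<Prod>i=0..<N. \<Prod>k\<in>{1..N}-{Suc (p i)}. ?A (Suc i) k)" by simp
  qed
  also have "\<dots> = det (Mm a b e f N u w)" by (rule d2[symmetric])
  finally show ?thesis .
qed

theorem mainTheorem7:
  fixes t a b c d e f :: complex and N :: nat and u w :: "nat \<Rightarrow> complex"
  assumes "t \<noteq> 0" "a \<noteq> 0" "b \<noteq> 0" "c \<noteq> 0" "d \<noteq> 0" "e \<noteq> 0" "f \<noteq> 0"
    and "t \<noteq> 1"
    and "c*d + a*f = 0" and "t*c*d + b*e = 0"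
    and "N \<ge> 1"
    and "\<And>j k. 1 \<le> j \<Longrightarrow> j < k \<Longrightarrow> k \<le> N \<Longrightarrow> u j \<noteq> u k"
    and "\<And>j k. 1 \<le> j \<Longrightarrow> j < k \<Longrightarrow> k \<le> N \<Longrightarrow> w j \<noteq> w k"
    and "\<And>j k. j \<in> {1..N} \<Longrightarrow> k \<in> {1..N} \<Longrightarrow> (a * u j + b * w k) * (e * u j + f * w k) \<noteq> 0"
  shows "Zpf t a b c d e f N u w =
    (\<Prod>j=1..N. (1-t)*c*u j) * (\<Prod>j=1..N. \<Prod>k=1..N. (a * u j + b * w k) * (e * u j + f * w k))
    / ((c*d) ^ (N*(N-1) div 2) * (\<Prod>j=1..N. \<Prod>k\<in>{j<..N}. (u j - u k) * (w k - w j)))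
    * det (mat N N (\<lambda>(j,k). 1 / ((a * u (j+1) + b * w (k+1)) * (e * u (j+1) + f * w (k+1)))))"
proof -
  note ab = assms(2,3,4,5,9,10)
  let ?C = "(c*d) ^ (N*(N-1) div 2)"
  let ?D = "(\<Prod>j=1..N. \<Prod>k\<in>{j<..N}. (u j - u k) * (w k - w j))"
  have D: "?D = DU N u * DW N w" unfolding DU_def DW_def by (simp add: prod.distrib)
  have Dnz: "?D \<noteq> 0"
  proof -
    have "(u j - u k) * (w k - w j) \<noteq> 0" if "j \<in> {1..N}" "k \<in> {j<..N}" for j k
      using assms(12)[of j k] assms(13)[of j k] that by auto
    then show ?thesis by (simp add: prod_zero_iff)
  qed
  have Cnz: "?C \<noteq> 0" using assms(4,5) by simp
  have cl: "Zpf t a b c d e f N u w * ?C * ?D = HH t a b c e f N u w"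
    using claim_all[OF ab, of N u w] unfolding GG_def D by (simp add: mult_ac)
  have kd: "(\<Prod>j=1..N. \<Prod>k=1..N. (a * u j + b * w k) * (e * u j + f * w k))
      * det (mat N N (\<lambda>(j,k). 1 / ((a * u (j+1) + b * w (k+1)) * (e * u (j+1) + f * w (k+1)))))
      = det (Mm a b e f N u w)"
    using key_det[of N a b e f u w] assms(14) unfolding AA_def by simp
  have "(\<Prod>j=1..N. (1-t)*c*u j) * (\<Prod>j=1..N. \<Prod>k=1..N. (a * u j + b * w k) * (e * u j + f * w k))
    / (?C * ?D) * det (mat N N (\<lambda>(j,k). 1 / ((a * u (j+1) + b * w (k+1)) * (e * u (j+1) + f * w (k+1)))))
    = (\<Prod>j=1..N. (1-t)*c*u j) * ((\<Prod>j=1..N. \<Prod>k=1..N. (a * u j + b * w k) * (e * u j + f * w k))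
      * det (mat N N (\<lambda>(j,k). 1 / ((a * u (j+1) + b * w (k+1)) * (e * u (j+1) + f * w (k+1)))))) / (?C * ?D)"
    by simp
  also have "\<dots> = HH t a b c e f N u w / (?C * ?D)" unfolding kd HH_def ..
  also have "\<dots> = Zpf t a b c d e f N u w" using cl Dnz Cnz by (simp add: field_simps)
  finally show ?thesis by simp
qed



end
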